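(* Let $H=\sum_{\mathbf{j}\in V}h_{\mathbf{j}}$ be a Hamiltonian with claw-free frustration graph $G$. Then \[ Z_G(-u^2)=\sum_{\mathcal{X}\in\mathscr{C}^{(\mathrm{even})}_G}(-u^2)^{|\partial\mathcal{X}|/2}\,2^{|\mathcal{X}|}\,I_{G\setminus\Gamma[\partial\mathcal{X}]}(-u^2)\prod_{C\in\mathcal{X}}h_C . \]
   Context: Setting: $V$ a finite set of distinct $n$-qubit Pauli strings, $H=\sum_{\mathbf{j}\in V}h_{\mathbf{j}}$ with $h_{\mathbf{j}}=b_{\mathbf{j}}\sigma^{\mathbf{j}}$, $b_{\mathbf{j}}\in\mathbb{R}\setminus\{0\}$; frustration graph $G$: edge iff terms anticommute; claw-free: no induced $K_{1,3}$. For an independent set $S$, $h_S=\prod_{\mathbf{j}\in S}h_{\mathbf{j}}$. Transfer operator $T_G(u)=\sum_{S}(-u)^{|S|}h_S$ over all independent sets, and $Z_G(-u^2):=T_G(u)T_G(-u)$. Weighted independence polynomial $I_G(x)=\sum_S x^{|S|}\prod_{\mathbf{j}\in S}b_{\mathbf{j}}^2$. An even hole is an induced cycle of even length $\ge4$; for an even hole $C$ with colour classes $C_a,C_b$, $h_C=h_{C_a}h_{C_b}$. Two even holes are compatible iff they are disjoint with no edges between them. $\mathscr{C}^{(\mathrm{even})}_G$ is the collection of all sets $\mathcal{X}$ of pairwise compatible even holes (including $\emptyset$); $|\mathcal{X}|$ is the number of holes in $\mathcal{X}$, $\partial\mathcal{X}=\bigcup_{C\in\mathcal{X}}C$, and $\Gamma[\partial\mathcal{X}]$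 is the closed neighbourhood of $\partial\mathcal{X}$. *)

theory Defs
  imports "Jordan_Normal_Form.Matrix"
begin

datatype pauli = PI | PX | PY | PZ

fun pauli_entry :: "pauli \<Rightarrow> nat \<Rightarrow> nat \<Rightarrow> complex" where
  "pauli_entry PI r c = (if r = c then 1 else 0)"
| "pauli_entry PX r c = (if r \<noteq> c then 1 else 0)"
| "pauli_entry PY r c = (if r = 0 \<and> c = 1 then - \<i> else if r = 1 \<and> c = 0 then \<i> else 0)"
| "pauli_entry PZ r c = (if r = c then (if r = 0 then 1 else -1) else 0)"

text \<open>The n-qubit Pauli string sigma^j (tensor product of the single-qubit factors),
  written out entrywise: qubit k corresponds to bit k of the row/column index.\<close>
definition pauli_mat :: "pauli list \<Rightarrow> complex mat" where
  "pauli_mat p = mat (2 ^ length p) (2 ^ length p)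
     (\<lambda>(r, c). \<Prod>k<length p. pauli_entry (p ! k) (r div 2 ^ k mod 2) (c div 2 ^ k mod 2))"

definition hterm :: "(pauli list \<Rightarrow> real) \<Rightarrow> pauli list \<Rightarrow> complex mat" where
  "hterm b j = complex_of_real (b j) \<cdot>\<^sub>m pauli_mat j"

definition anticommute :: "complex mat \<Rightarrow> complex mat \<Rightarrow> bool" where
  "anticommute A B \<longleftrightarrow> A * B = - (B * A)"

definition fadj :: "pauli list set \<Rightarrow> pauli list \<Rightarrow> pauli list \<Rightarrow> bool" where
  "fadj V j k \<longleftrightarrow> j \<in> V \<and> k \<in> V \<and> j \<noteq> k \<and> anticommute (pauli_mat j) (pauli_mat k)"

definition claw_free :: "pauli list set \<Rightarrow> bool" where
  "claw_free V \<longleftrightarrow> \<not> (\<exists>v a b c. distinct [a, b, c] \<and>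
      fadj V v a \<and> fadj V v b \<and> fadj V v c \<and>
      \<not> fadj V a b \<and> \<not> fadj V a c \<and> \<not> fadj V b c)"

definition indep :: "pauli list set \<Rightarrow> pauli list set \<Rightarrow> bool" where
  "indep V S \<longleftrightarrow> S \<subseteq> V \<and> (\<forall>j\<in>S. \<forall>k\<in>S. \<not> fadj V j k)"

text \<open>Even hole: induced cycle of even length at least 4.\<close>
definition even_hole :: "pauli list set \<Rightarrow> pauli list set \<Rightarrow> bool" where
  "even_hole V C \<longleftrightarrow> C \<subseteq> V \<and> card C \<ge> 4 \<and> even (card C) \<and>
     (\<exists>vs. distinct vs \<and> set vs = C \<and>
        (\<forall>i<length vs. \<forall>k<length vs.
           fadj V (vs ! i) (vs ! k) \<longleftrightarrow>
             (k = Suc i mod length vs \<or> i = Suc k mod length vs)))"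

definition compatible :: "pauli list set \<Rightarrow> pauli list set \<Rightarrow> pauli list set \<Rightarrow> bool" where
  "compatible V C D \<longleftrightarrow> C \<inter> D = {} \<and> (\<forall>x\<in>C. \<forall>y\<in>D. \<not> fadj V x y)"

definition even_hole_configs :: "pauli list set \<Rightarrow> pauli list set set set" where
  "even_hole_configs V = {X. (\<forall>C\<in>X. even_hole V C) \<and>
      (\<forall>C\<in>X. \<forall>D\<in>X. C \<noteq> D \<longrightarrow> compatible V C D)}"

definition closed_nbhd :: "pauli list set \<Rightarrow> pauli list set \<Rightarrow> pauli list set" where
  "closed_nbhd V A = A \<union> {v\<in>V. \<exists>a\<in>A. fadj V v a}"

definition mat_prod_list :: "nat \<Rightarrow> complex mat list \<Rightarrow> complex mat" where
  "mat_prod_list d xs = foldr (*) xs (1\<^sub>m d)"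

definition mat_sum :: "nat \<Rightarrow> ('a \<Rightarrow> complex mat) \<Rightarrow> 'a set \<Rightarrow> complex mat" where
  "mat_sum d f A = mat d d (\<lambda>rc. \<Sum>x\<in>A. f x $$ rc)"

text \<open>Product of commuting operators indexed by a finite set (order taken from an arbitrary
  enumeration; irrelevant when the factors commute).\<close>
definition set_prod :: "nat \<Rightarrow> ('a \<Rightarrow> complex mat) \<Rightarrow> 'a set \<Rightarrow> complex mat" where
  "set_prod d f A = mat_prod_list d (map f (SOME xs. distinct xs \<and> set xs = A))"

definition h_set :: "nat \<Rightarrow> (pauli list \<Rightarrow> real) \<Rightarrow> pauli list set \<Rightarrow> complex mat" where
  "h_set n b S = set_prod (2 ^ n) (hterm b) S"

text \<open>h_C = h_{C_a} h_{C_b} for an even hole C with colour classes C_a, C_b.\<close>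
definition h_hole :: "nat \<Rightarrow> pauli list set \<Rightarrow> (pauli list \<Rightarrow> real) \<Rightarrow> pauli list set \<Rightarrow> complex mat" where
  "h_hole n V b C = (let (Ca, Cb) = (SOME (Ca, Cb). Ca \<union> Cb = C \<and> Ca \<inter> Cb = {} \<and>
        indep V Ca \<and> indep V Cb) in h_set n b Ca * h_set n b Cb)"

definition transfer :: "nat \<Rightarrow> pauli list set \<Rightarrow> (pauli list \<Rightarrow> real) \<Rightarrow> complex \<Rightarrow> complex mat" where
  "transfer n V b u = mat_sum (2 ^ n) (\<lambda>S. ((- u) ^ card S) \<cdot>\<^sub>m h_set n b S) {S. indep V S}"

text \<open>Z_G(-u^2) := T_G(u) T_G(-u).\<close>
definition Zop :: "nat \<Rightarrow> pauli list set \<Rightarrow> (pauli list \<Rightarrow> real) \<Rightarrow> complex \<Rightarrow> complex mat" where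
  "Zop n V b u = transfer n V b u * transfer n V b (- u)"

definition indep_poly :: "pauli list set \<Rightarrow> (pauli list \<Rightarrow> real) \<Rightarrow> pauli list set \<Rightarrow> complex \<Rightarrow> complex" where
  "indep_poly V b W x = (\<Sum>S\<in>{S. S \<subseteq> W \<and> indep V S}.
      x ^ card S * (\<Prod>j\<in>S. complex_of_real ((b j)\<^sup>2)))"

end

theory Submission
  imports Defs
begin


lemma sum_lessThan_double: "(\<Sum>t<2*m. f t) = (\<Sum>t<m. f (2*t) + f (2*t+1::nat)) " for f :: "nat \<Rightarrow> 'a::comm_monoid_add"
  by (induction m) (auto simp: add.assoc)

lemma div_bit_shift: "x < 2 \<Longrightarrow> (2*t + x) div 2 ^ Suc k mod 2 = t div 2^k mod (2::nat)"
proof -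
  assume "x < 2"
  have "(2*t + x) div 2 ^ Suc k = ((2*t+x) div 2) div 2^k" by (simp add: div_mult2_eq)
  also have "(2*t+x) div 2 = t" using \<open>x<2\<close> by simp
  finally show ?thesis by simp
qed

lemma bits_sum_prod:
  "(\<Sum>t<2^n. \<Prod>k<n. g k (t div 2^k mod 2)) = (\<Prod>k<n. g k 0 + g k (1::nat) :: complex)"
proof (induction n arbitrary: g)
  case 0
  then show ?case by simp
next
  case (Suc n)
  have "(\<Sum>t<2^Suc n. \<Prod>k<Suc n. g k (t div 2^k mod 2))
      = (\<Sum>t<2^n. (\<Prod>k<Suc n. g k ((2*t) div 2^k mod 2)) + (\<Prod>k<Suc n. g k ((2*t+1) div 2^k mod 2)))"
    by (simp add: sum_lessThan_double)
  also have "\<dots> = (\<Sum>t<2^n. (g 0 0 + g 0 1) * (\<Prod>k<n. g (Suc k) (t div 2^k mod 2)))"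
  proof (rule sum.cong[OF refl])
    fix t
    have a: "(2*t) div 2 ^ Suc k mod 2 = t div 2^k mod (2::nat)" for k
      using div_bit_shift[of 0 t k] by simp
    have b: "(2*t+1) div 2 ^ Suc k mod 2 = t div 2^k mod (2::nat)" for k
      using div_bit_shift[of 1 t k] by simp
    show "(\<Prod>k<Suc n. g k ((2*t) div 2^k mod 2)) + (\<Prod>k<Suc n. g k ((2*t+1) div 2^k mod 2))
       = (g 0 0 + g 0 1) * (\<Prod>k<n. g (Suc k) (t div 2^k mod 2))"
      unfolding prod.lessThan_Suc_shift a b by (simp add: algebra_simps mod_Suc)
  qed
  also have "\<dots> = (g 0 0 + g 0 1) * (\<Prod>k<n. g (Suc k) 0 + g (Suc k) 1)"
    using Suc.IH[of "\<lambda>k. g (Suc k)"] by (simp add: sum_distrib_left[symmetric])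
  also have "\<dots> = (\<Prod>k<Suc n. g k 0 + g k 1)"
    unfolding prod.lessThan_Suc_shift by simp
  finally show ?case .
qed

lemma bits_eq_imp_eq:
  "r < 2^n \<Longrightarrow> c < 2^n \<Longrightarrow> (\<forall>k<n. r div 2^k mod 2 = c div 2^k mod (2::nat)) \<Longrightarrow> r = c"
proof (induction n arbitrary: r c)
  case 0
  then show ?case by simp
next
  case (Suc n)
  have "\<forall>k<n. (r div 2) div 2^k mod 2 = (c div 2) div 2^k mod 2"
  proof (intro allI impI)
    fix k assume "k < n"
    then have "r div 2 ^ Suc k mod 2 = c div 2 ^ Suc k mod 2" using Suc.prems(3) by auto
    then show "(r div 2) div 2^k mod 2 = (c div 2) div 2^k mod 2" by (simp add: div_mult2_eq)
  qed
  moreover have "r div 2 < 2^n" "c div 2 < 2^n" using Suc.prems by auto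
  ultimately have "r div 2 = c div 2" using Suc.IH by blast
  moreover have "r mod 2 = c mod 2" using Suc.prems(3) by (metis power_0 div_by_1 zero_less_Suc)
  ultimately show ?case by (metis div_mult_mod_eq)
qed

definition pe2 :: "pauli \<Rightarrow> pauli \<Rightarrow> nat \<Rightarrow> nat \<Rightarrow> complex" where
  "pe2 a b r c = pauli_entry a r 0 * pauli_entry b 0 c + pauli_entry a r 1 * pauli_entry b 1 c"

definition psgn :: "pauli \<Rightarrow> pauli \<Rightarrow> complex" where
  "psgn a b = (if a = b \<or> a = PI \<or> b = PI then 1 else -1)"

lemma pe2_swap: "r < 2 \<Longrightarrow> c < 2 \<Longrightarrow> pe2 a b r c = psgn a b * pe2 b a r c"
  by (cases a; cases b; cases r; cases c) (auto simp: pe2_def psgn_def less_Suc_eq numeral_2_eq_2)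

lemma pe2_same: "r < 2 \<Longrightarrow> c < 2 \<Longrightarrow> pe2 a a r c = (if r = c then 1 else 0)"
  by (cases a; cases r; cases c) (auto simp: pe2_def less_Suc_eq numeral_2_eq_2)

lemma pauli_mat_carrier: "length p = n \<Longrightarrow> pauli_mat p \<in> carrier_mat (2^n) (2^n)"
  by (auto simp: pauli_mat_def)

lemma pauli_mult_entry:
  assumes "length p = n" "length q = n" "r < 2^n" "c < 2^n"
  shows "(pauli_mat p * pauli_mat q) $$ (r,c) = (\<Prod>k<n. pe2 (p!k) (q!k) (r div 2^k mod 2) (c div 2^k mod 2))"
proof -
  have "(pauli_mat p * pauli_mat q) $$ (r,c) =
     (\<Sum>t<2^n. (\<Prod>k<n. pauli_entry (p!k) (r div 2^k mod 2) (t div 2^k mod 2)) *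
                (\<Prod>k<n. pauli_entry (q!k) (t div 2^k mod 2) (c div 2^k mod 2)))"
    using assms by (simp add: pauli_mat_def scalar_prod_def lessThan_atLeast0)
  also have "\<dots> = (\<Sum>t<2^n. \<Prod>k<n. pauli_entry (p!k) (r div 2^k mod 2) (t div 2^k mod 2) *
                pauli_entry (q!k) (t div 2^k mod 2) (c div 2^k mod 2))"
    by (simp add: prod.distrib)
  also have "\<dots> = (\<Prod>k<n. pe2 (p!k) (q!k) (r div 2^k mod 2) (c div 2^k mod 2))"
    by (subst bits_sum_prod) (simp add: pe2_def)
  finally show ?thesis .
qed

definition psign :: "pauli list \<Rightarrow> pauli list \<Rightarrow> complex" where
  "psign p q = (\<Prod>k<length p. psgn (p!k) (q!k))"

lemma pauli_swap:
  assumes "length p = n" "length q = n"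
  shows "pauli_mat p * pauli_mat q = psign p q \<cdot>\<^sub>m (pauli_mat q * pauli_mat p)"
proof (rule eq_matI)
  fix i j assume ij: "i < dim_row (psign p q \<cdot>\<^sub>m (pauli_mat q * pauli_mat p))"
    "j < dim_col (psign p q \<cdot>\<^sub>m (pauli_mat q * pauli_mat p))"
  then have i: "i < 2^n" and j: "j < 2^n" using assms by (auto simp: pauli_mat_def)
  show "(pauli_mat p * pauli_mat q) $$ (i, j) = (psign p q \<cdot>\<^sub>m (pauli_mat q * pauli_mat p)) $$ (i, j)"
  proof -
    have e1: "(pauli_mat q * pauli_mat p) $$ (i, j) = (\<Prod>k<n. pe2 (q!k) (p!k) (i div 2^k mod 2) (j div 2^k mod 2))"
      using pauli_mult_entry[OF assms(2,1) i j] .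
    have "(psign p q \<cdot>\<^sub>m (pauli_mat q * pauli_mat p)) $$ (i, j) = psign p q * (pauli_mat q * pauli_mat p) $$ (i, j)"
      using i j assms by (simp add: pauli_mat_def)
    then show ?thesis unfolding e1 pauli_mult_entry[OF assms i j] 
      using assms by (simp add: psign_def pe2_swap[where a="p!_"] prod.distrib[symmetric])
  qed
qed (use assms in \<open>auto simp: pauli_mat_def\<close>)

lemma psign_cases: "psign p q = 1 \<or> psign p q = -1"
proof -
  have "\<And>A. finite A \<Longrightarrow> (\<Prod>k\<in>A. psgn (p!k) (q!k)) = 1 \<or> (\<Prod>k\<in>A. psgn (p!k) (q!k)) = -1"
  proof -
    fix A :: "nat set" assume "finite A"
    then show "(\<Prod>k\<in>A. psgn (p!k) (q!k)) = 1 \<or> (\<Prod>k\<in>A. psgn (p!k) (q!k)) = -1"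
      by (induction A rule: finite_induct) (auto simp: psgn_def)
  qed
  then show ?thesis unfolding psign_def by blast
qed

lemma pauli_sq:
  assumes "length p = n"
  shows "pauli_mat p * pauli_mat p = 1\<^sub>m (2^n)"
proof (rule eq_matI)
  fix i j assume ij: "i < dim_row (1\<^sub>m (2^n) :: complex mat)" "j < dim_col (1\<^sub>m (2^n) :: complex mat)"
  then have i: "i < 2^n" and j: "j < 2^n" by auto
  have "(pauli_mat p * pauli_mat p) $$ (i, j) = (\<Prod>k<n. if i div 2^k mod 2 = j div 2^k mod 2 then 1 else 0)"
    using assms i j by (simp add: pauli_mult_entry pe2_same)
  also have "\<dots> = (if i = j then 1 else 0)"
  proof (cases "i = j")
    case False
    then obtain k where "k < n" "i div 2^k mod 2 \<noteq> j div 2^k mod 2" using bits_eq_imp_eq[OF i j] by blast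
    then show ?thesis using False by (auto intro: prod_zero)
  qed simp
  finally show "(pauli_mat p * pauli_mat p) $$ (i, j) = 1\<^sub>m (2 ^ n) $$ (i, j)" using i j by simp
qed (use assms in \<open>auto simp: pauli_mat_def\<close>)


lemma smult_smult_mat: "a \<cdot>\<^sub>m (c \<cdot>\<^sub>m A) = (a * c) \<cdot>\<^sub>m (A :: 'a::semigroup_mult mat)"
  by (rule eq_matI) (auto simp: mult.assoc)

lemma one_smult_mat[simp]: "(1::'a::monoid_mult) \<cdot>\<^sub>m A = A"
  by (rule eq_matI) auto

lemma uminus_as_smult: "- A = (-1::complex) \<cdot>\<^sub>m A"
  by (rule eq_matI) auto

definition comm_on :: "nat \<Rightarrow> ('a \<Rightarrow> complex mat) \<Rightarrow> 'a set \<Rightarrow> bool" where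
  "comm_on d f A \<longleftrightarrow> (\<forall>x\<in>A. f x \<in> carrier_mat d d) \<and> (\<forall>x\<in>A. \<forall>y\<in>A. f x * f y = f y * f x)"

lemma comm_on_subset: "comm_on d f A \<Longrightarrow> B \<subseteq> A \<Longrightarrow> comm_on d f B"
  unfolding comm_on_def by blast

lemma mpl_Nil[simp]: "mat_prod_list d [] = 1\<^sub>m d"
  by (simp add: mat_prod_list_def)

lemma mpl_Cons[simp]: "mat_prod_list d (x # xs) = x * mat_prod_list d xs"
  by (simp add: mat_prod_list_def)

lemma mpl_carrier: "(\<forall>x\<in>set xs. x \<in> carrier_mat d d) \<Longrightarrow> mat_prod_list d xs \<in> carrier_mat d d"
  by (induction xs) auto

lemma mpl_append: "(\<forall>x\<in>set xs. x \<in> carrier_mat d d) \<Longrightarrow> (\<forall>x\<in>set ys. x \<in> carrier_mat d d) \<Longrightarrow>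
   mat_prod_list d (xs @ ys) = mat_prod_list d xs * mat_prod_list d ys"
proof (induction xs)
  case Nil
  then show ?case using mpl_carrier[of ys d] by simp
next
  case (Cons x xs)
  have c: "x \<in> carrier_mat d d" "mat_prod_list d xs \<in> carrier_mat d d" "mat_prod_list d ys \<in> carrier_mat d d"
    using Cons.prems mpl_carrier[of ys d] mpl_carrier[of xs d] by auto
  show ?case using Cons c by simp
qed

lemma mpl_comm: "M \<in> carrier_mat d d \<Longrightarrow> (\<forall>x\<in>set xs. x \<in> carrier_mat d d \<and> M * x = x * M) \<Longrightarrow>
   M * mat_prod_list d xs = mat_prod_list d xs * M"
proof (induction xs)
  case Nil
  then show ?case by simp
next
  case (Cons x xs)
  have cx: "x \<in> carrier_mat d d" and cl: "mat_prod_list d xs \<in> carrier_mat d d"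
    using Cons.prems mpl_carrier[of xs d] by auto
  have "M * mat_prod_list d (x # xs) = (M * x) * mat_prod_list d xs"
    by (simp only: mpl_Cons assoc_mult_mat[OF Cons.prems(1) cx cl])
  also have "\<dots> = (x * M) * mat_prod_list d xs" using Cons.prems by simp
  also have "\<dots> = x * (M * mat_prod_list d xs)" using Cons.prems cx cl by simp
  also have "\<dots> = x * (mat_prod_list d xs * M)" using Cons by simp
  also have "\<dots> = mat_prod_list d (x # xs) * M"
    by (simp only: mpl_Cons assoc_mult_mat[OF cx cl Cons.prems(1)])
  finally show ?case .
qed

lemma mpl_perm:
  assumes "distinct xs" "distinct ys" "set xs = set ys" "comm_on d f (set xs)"
  shows "mat_prod_list d (map f xs) = mat_prod_list d (map f ys)"
  using assms
proof (induction xs arbitrary: ys)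
  case Nil
  then show ?case by simp
next
  case (Cons x xs)
  from Cons.prems have "x \<in> set ys" by auto
  then obtain ys1 ys2 where ys: "ys = ys1 @ x # ys2" by (meson split_list)
  have c: "\<forall>z\<in>set ys. f z \<in> carrier_mat d d" using Cons.prems unfolding comm_on_def by auto
  have fx: "f x \<in> carrier_mat d d" using c ys by auto
  have c1: "mat_prod_list d (map f ys1) \<in> carrier_mat d d" and c2: "mat_prod_list d (map f ys2) \<in> carrier_mat d d"
    using c ys by (auto intro!: mpl_carrier)
  have "\<forall>z\<in>set (map f ys1). z \<in> carrier_mat d d \<and> f x * z = z * f x"
  proof
    fix z assume "z \<in> set (map f ys1)"
    then obtain y where y: "y \<in> set ys1" "z = f y" by auto
    then have "y \<in> set (x # xs)" using Cons.prems(3) ys by auto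
    moreover have "x \<in> set (x # xs)" by simp
    ultimately show "z \<in> carrier_mat d d \<and> f x * z = z * f x"
      using Cons.prems(4) y unfolding comm_on_def by blast
  qed
  then have com: "f x * mat_prod_list d (map f ys1) = mat_prod_list d (map f ys1) * f x"
    using fx by (intro mpl_comm)
  have "mat_prod_list d (map f ys) = mat_prod_list d (map f ys1) * (f x * mat_prod_list d (map f ys2))"
    using c ys by (simp add: mpl_append)
  also have "\<dots> = (mat_prod_list d (map f ys1) * f x) * mat_prod_list d (map f ys2)"
    by (rule assoc_mult_mat[OF c1 fx c2, symmetric])
  also have "\<dots> = (f x * mat_prod_list d (map f ys1)) * mat_prod_list d (map f ys2)"
    by (simp only: com)
  also have "\<dots> = f x * (mat_prod_list d (map f ys1) * mat_prod_list d (map f ys2))"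
    by (rule assoc_mult_mat[OF fx c1 c2])
  also have "mat_prod_list d (map f ys1) * mat_prod_list d (map f ys2) = mat_prod_list d (map f (ys1 @ ys2))"
    using c ys by (simp add: mpl_append)
  also have "mat_prod_list d (map f (ys1 @ ys2)) = mat_prod_list d (map f xs)"
    using Cons.prems ys by (intro Cons.IH[symmetric]) (auto intro: comm_on_subset)
  finally show ?case by simp
qed

lemma set_prod_list:
  assumes "distinct xs" "set xs = A" "comm_on d f A"
  shows "set_prod d f A = mat_prod_list d (map f xs)"
proof -
  have ex: "\<exists>ys. distinct ys \<and> set ys = A" using assms by blast
  have "distinct (SOME ys. distinct ys \<and> set ys = A) \<and> set (SOME ys. distinct ys \<and> set ys = A) = A"
    by (rule someI_ex[OF ex])
  then show ?thesis unfolding set_prod_def using assms by (intro mpl_perm) auto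
qed

lemma set_prod_carrier:
  assumes "finite A" "\<forall>x\<in>A. f x \<in> carrier_mat d d"
  shows "set_prod d f A \<in> carrier_mat d d"
proof -
  obtain xs where "distinct xs" "set xs = A" using assms finite_distinct_list by blast
  then have "distinct (SOME ys. distinct ys \<and> set ys = A) \<and> set (SOME ys. distinct ys \<and> set ys = A) = A"
    by (intro someI_ex[of "\<lambda>ys. distinct ys \<and> set ys = A"]) blast
  then show ?thesis unfolding set_prod_def using assms by (intro mpl_carrier) auto
qed

lemma set_prod_empty[simp]: "set_prod d f {} = 1\<^sub>m d"
  using set_prod_list[of "[]" "{}" d f] by (simp add: comm_on_def)

lemma set_prod_insert:
  assumes "finite A" "x \<notin> A" "comm_on d f (insert x A)"
  shows "set_prod d f (insert x A) = f x * set_prod d f A"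
proof -
  obtain xs where xs: "distinct xs" "set xs = A" using assms finite_distinct_list by blast
  have "set_prod d f (insert x A) = mat_prod_list d (map f (x # xs))"
    using xs assms by (intro set_prod_list) auto
  moreover have "set_prod d f A = mat_prod_list d (map f xs)"
    using xs assms by (intro set_prod_list) (auto intro: comm_on_subset)
  ultimately show ?thesis by simp
qed

lemma set_prod_comm:
  assumes "finite A" "comm_on d f A" "M \<in> carrier_mat d d" "\<forall>x\<in>A. M * f x = f x * M"
  shows "M * set_prod d f A = set_prod d f A * M"
proof -
  obtain xs where xs: "distinct xs" "set xs = A" using assms finite_distinct_list by blast
  show ?thesis using set_prod_list[OF xs assms(2)] assms xs unfolding comm_on_def
    by (simp add: mpl_comm)
qed

lemma set_prod_union:
  assumes "finite A" "finite B" "A \<inter> B = {}" "comm_on d f (A \<union> B)"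
  shows "set_prod d f (A \<union> B) = set_prod d f A * set_prod d f B"
  using assms
proof (induction A rule: finite_induct)
  case empty
  then show ?case using set_prod_carrier[of B f d] unfolding comm_on_def by simp
next
  case (insert x F)
  have cF: "set_prod d f F \<in> carrier_mat d d" "set_prod d f B \<in> carrier_mat d d" "f x \<in> carrier_mat d d"
    using insert.prems insert.hyps unfolding comm_on_def by (auto intro!: set_prod_carrier)
  have IH: "set_prod d f (F \<union> B) = set_prod d f F * set_prod d f B"
    using insert.prems insert.hyps by (intro insert.IH) (auto intro: comm_on_subset)
  have "set_prod d f (insert x F \<union> B) = set_prod d f (insert x (F \<union> B))" by simp
  also have "\<dots> = f x * set_prod d f (F \<union> B)"
    using insert.prems insert.hyps by (intro set_prod_insert) auto
  also have "\<dots> = f x * (set_prod d f F * set_prod d f B)" unfolding IH ..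
  also have "\<dots> = (f x * set_prod d f F) * set_prod d f B" using cF by simp
  also have "f x * set_prod d f F = set_prod d f (insert x F)"
    using insert.prems insert.hyps by (intro set_prod_insert[symmetric]) (auto intro: comm_on_subset)
  finally show ?case .
qed


lemma ms_carrier[simp]: "mat_sum d f A \<in> carrier_mat d d"
  by (simp add: mat_sum_def)

lemma ms_dims[simp]: "dim_row (mat_sum d f A) = d" "dim_col (mat_sum d f A) = d"
  by (simp_all add: mat_sum_def)

lemma ms_index: "i < d \<Longrightarrow> j < d \<Longrightarrow> mat_sum d f A $$ (i,j) = (\<Sum>x\<in>A. f x $$ (i,j))"
  by (simp add: mat_sum_def)

lemma ms_cong: "A = B \<Longrightarrow> (\<And>x. x \<in> B \<Longrightarrow> f x = g x) \<Longrightarrow> mat_sum d f A = mat_sum d g B"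
  unfolding mat_sum_def by (auto intro!: sum.cong)

lemma ms_reindex: "bij_betw g A B \<Longrightarrow> mat_sum d f B = mat_sum d (\<lambda>x. f (g x)) A"
  unfolding mat_sum_def by (rule cong[of "mat d d"], simp) (auto simp: sum.reindex_bij_betw[symmetric])

lemma ms_Sigma: "finite A \<Longrightarrow> (\<forall>x\<in>A. finite (B x)) \<Longrightarrow>
  mat_sum d (\<lambda>p. f (fst p) (snd p)) (Sigma A B) = mat_sum d (\<lambda>x. mat_sum d (f x) (B x)) A"
proof (rule eq_matI)
  fix i j assume "i < dim_row (mat_sum d (\<lambda>x. mat_sum d (f x) (B x)) A)" "j < dim_col (mat_sum d (\<lambda>x. mat_sum d (f x) (B x)) A)"
  then have i: "i < d" and j: "j < d" by auto
  assume "finite A" "\<forall>x\<in>A. finite (B x)"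
  then have "(\<Sum>x\<in>A. \<Sum>y\<in>B x. f x y $$ (i,j)) = (\<Sum>(x,y)\<in>Sigma A B. f x y $$ (i,j))"
    by (intro sum.Sigma) auto
  then show "mat_sum d (\<lambda>p. f (fst p) (snd p)) (Sigma A B) $$ (i, j) = mat_sum d (\<lambda>x. mat_sum d (f x) (B x)) A $$ (i, j)"
    using i j by (simp add: ms_index split_beta)
qed auto

lemma ms_mult:
  assumes "finite A" "finite B" "\<forall>x\<in>A. f x \<in> carrier_mat d d" "\<forall>y\<in>B. g y \<in> carrier_mat d d"
  shows "mat_sum d f A * mat_sum d g B = mat_sum d (\<lambda>p. f (fst p) * g (snd p)) (A \<times> B)"
proof (rule eq_matI)
  fix i j assume ij: "i < dim_row (mat_sum d (\<lambda>p. f (fst p) * g (snd p)) (A \<times> B))"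
    "j < dim_col (mat_sum d (\<lambda>p. f (fst p) * g (snd p)) (A \<times> B))"
  then have i: "i < d" and j: "j < d" by auto
  have "(mat_sum d f A * mat_sum d g B) $$ (i,j) = (\<Sum>k<d. (\<Sum>x\<in>A. f x $$ (i,k)) * (\<Sum>y\<in>B. g y $$ (k,j)))"
    using i j by (simp add: scalar_prod_def ms_index lessThan_atLeast0)
  also have "\<dots> = (\<Sum>k<d. \<Sum>p\<in>A \<times> B. f (fst p) $$ (i,k) * g (snd p) $$ (k,j))"
  proof (rule sum.cong[OF refl])
    fix k
    have "(\<Sum>x\<in>A. f x $$ (i,k)) * (\<Sum>y\<in>B. g y $$ (k,j)) = (\<Sum>x\<in>A. \<Sum>y\<in>B. f x $$ (i,k) * g y $$ (k,j))"
      by (rule sum_product)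
    also have "\<dots> = (\<Sum>(x,y)\<in>A \<times> B. f x $$ (i,k) * g y $$ (k,j))"
      by (rule sum.cartesian_product)
    finally show "(\<Sum>x\<in>A. f x $$ (i,k)) * (\<Sum>y\<in>B. g y $$ (k,j)) = (\<Sum>p\<in>A \<times> B. f (fst p) $$ (i,k) * g (snd p) $$ (k,j))"
      by (simp add: split_beta)
  qed
  also have "\<dots> = (\<Sum>p\<in>A \<times> B. \<Sum>k<d. f (fst p) $$ (i,k) * g (snd p) $$ (k,j))"
    by (rule sum.swap)
  also have "\<dots> = (\<Sum>p\<in>A \<times> B. (f (fst p) * g (snd p)) $$ (i,j))"
  proof (rule sum.cong[OF refl])
    fix p assume "p \<in> A \<times> B"
    then have "f (fst p) \<in> carrier_mat d d" "g (snd p) \<in> carrier_mat d d" using assms by auto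
    then show "(\<Sum>k<d. f (fst p) $$ (i,k) * g (snd p) $$ (k,j)) = (f (fst p) * g (snd p)) $$ (i,j)"
      using i j by (simp add: scalar_prod_def lessThan_atLeast0)
  qed
  finally show "(mat_sum d f A * mat_sum d g B) $$ (i,j) = mat_sum d (\<lambda>p. f (fst p) * g (snd p)) (A \<times> B) $$ (i,j)"
    using i j by (simp add: ms_index)
qed auto

lemma ms_smult: "\<forall>x\<in>A. f x \<in> carrier_mat d d \<Longrightarrow> c \<cdot>\<^sub>m mat_sum d f A = mat_sum d (\<lambda>x. c \<cdot>\<^sub>m f x) A"
  by (rule eq_matI) (auto simp: ms_index sum_distrib_left intro!: sum.cong)

lemma ms_mult_left:
  assumes "M \<in> carrier_mat d d" "\<forall>x\<in>A. f x \<in> carrier_mat d d"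
  shows "M * mat_sum d f A = mat_sum d (\<lambda>x. M * f x) A"
proof (rule eq_matI)
  fix i j assume "i < dim_row (mat_sum d (\<lambda>x. M * f x) A)" "j < dim_col (mat_sum d (\<lambda>x. M * f x) A)"
  then have i: "i < d" and j: "j < d" by auto
  have "(M * mat_sum d f A) $$ (i,j) = (\<Sum>k<d. M $$ (i,k) * (\<Sum>x\<in>A. f x $$ (k,j)))"
    using assms i j by (simp add: scalar_prod_def ms_index lessThan_atLeast0)
  also have "\<dots> = (\<Sum>x\<in>A. \<Sum>k<d. M $$ (i,k) * f x $$ (k,j))"
    by (simp add: sum_distrib_left sum.swap[of _ A])
  also have "\<dots> = (\<Sum>x\<in>A. (M * f x) $$ (i,j))"
    using assms i j by (intro sum.cong) (auto simp: scalar_prod_def lessThan_atLeast0)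
  finally show "(M * mat_sum d f A) $$ (i,j) = mat_sum d (\<lambda>x. M * f x) A $$ (i,j)"
    using i j by (simp add: ms_index)
qed (use assms in auto)

lemma ms_scalar: "M \<in> carrier_mat d d \<Longrightarrow> mat_sum d (\<lambda>x. a x \<cdot>\<^sub>m M) A = (\<Sum>x\<in>A. a x) \<cdot>\<^sub>m M"
  by (rule eq_matI) (auto simp: ms_index sum_distrib_right)

lemma ms_mono_neutral:
  assumes "finite B" "A \<subseteq> B" "\<forall>x\<in>B - A. f x = 0\<^sub>m d d"
  shows "mat_sum d f B = mat_sum d f A"
proof (rule eq_matI)
  fix i j assume "i < dim_row (mat_sum d f A)" "j < dim_col (mat_sum d f A)"
  then have i: "i < d" and j: "j < d" by auto
  show "mat_sum d f B $$ (i,j) = mat_sum d f A $$ (i,j)"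
    using i j assms by (simp add: ms_index) (rule sum.mono_neutral_right, auto)
qed auto

lemma ms_two: "a \<noteq> c \<Longrightarrow> mat_sum d f {a, c} = mat d d (\<lambda>rc. f a $$ rc + f c $$ rc)"
  by (simp add: mat_sum_def)


lemma ms_empty[simp]: "mat_sum d f {} = 0\<^sub>m d d"
  by (rule eq_matI) (auto simp: ms_index)

locale ham =
  fixes n :: nat and V :: "pauli list set" and b :: "pauli list \<Rightarrow> real"
  assumes finV: "finite V" and lenV: "\<forall>j\<in>V. length j = n" and clawV: "claw_free V"
begin

abbreviation CD where "CD \<equiv> carrier_mat ((2::nat)^n) (2^n) :: complex mat set"

lemma multD[simp]: "A \<in> CD \<Longrightarrow> B \<in> CD \<Longrightarrow> A * B \<in> CD" by simp
lemma assocD[simp]: "A \<in> CD \<Longrightarrow> B \<in> CD \<Longrightarrow> C \<in> CD \<Longrightarrow> (A * B) * C = A * (B * C)" by simp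
lemma smultlD[simp]: "A \<in> CD \<Longrightarrow> B \<in> CD \<Longrightarrow> (k \<cdot>\<^sub>m A) * B = k \<cdot>\<^sub>m (A * B)" by (rule mult_smult_assoc_mat)
lemma smultrD[simp]: "A \<in> CD \<Longrightarrow> B \<in> CD \<Longrightarrow> A * (k \<cdot>\<^sub>m B) = k \<cdot>\<^sub>m (A * B)" by (rule mult_smult_distrib)
lemma oneRD[simp]: "A \<in> CD \<Longrightarrow> A * 1\<^sub>m (2^n) = A" by (rule right_mult_one_mat)
lemma oneLD[simp]: "A \<in> CD \<Longrightarrow> 1\<^sub>m (2^n) * A = A" by (rule left_mult_one_mat)
lemmas smult_smult_mat[simp]

lemma hc[simp]: "j \<in> V \<Longrightarrow> hterm b j \<in> carrier_mat (2^n) (2^n)"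
  unfolding hterm_def using lenV pauli_mat_carrier by auto

lemma fadj_V: "fadj V j k \<Longrightarrow> j \<in> V \<and> k \<in> V \<and> j \<noteq> k"
  by (simp add: fadj_def)

lemma fadj_irrefl[simp]: "\<not> fadj V j j"
  by (simp add: fadj_def)

lemma fadj_sym: "fadj V j k = fadj V k j"
proof -
  have "anticommute A B \<Longrightarrow> anticommute B A" for A B :: "complex mat"
    unfolding anticommute_def by (metis uminus_uminus_mat)
  then show ?thesis unfolding fadj_def by blast
qed

lemma h_mult: "j \<in> V \<Longrightarrow> k \<in> V \<Longrightarrow>
  hterm b j * hterm b k = (complex_of_real (b j) * complex_of_real (b k)) \<cdot>\<^sub>m (pauli_mat j * pauli_mat k)"
proof -
  assume a: "j \<in> V" "k \<in> V"
  then have c: "pauli_mat j \<in> carrier_mat (2^n) (2^n)" "pauli_mat k \<in> carrier_mat (2^n) (2^n)"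
    using lenV pauli_mat_carrier by auto
  show ?thesis unfolding hterm_def using c
    by (simp add: mult.commute[of "complex_of_real (b k)" "complex_of_real (b j)"])
qed

lemma h_swap: assumes "j \<in> V" "k \<in> V"
  shows "hterm b j * hterm b k = psign j k \<cdot>\<^sub>m (hterm b k * hterm b j)"
proof -
  have "hterm b j * hterm b k = (complex_of_real (b j) * complex_of_real (b k)) \<cdot>\<^sub>m (psign j k \<cdot>\<^sub>m (pauli_mat k * pauli_mat j))"
    using assms lenV by (simp add: h_mult pauli_swap[of j n k])
  also have "\<dots> = psign j k \<cdot>\<^sub>m ((complex_of_real (b k) * complex_of_real (b j)) \<cdot>\<^sub>m (pauli_mat k * pauli_mat j))"
    by (simp add: smult_smult_mat mult.commute mult.left_commute)
  finally show ?thesis using assms by (simp add: h_mult mult.commute)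
qed

lemma h_anti: assumes "fadj V j k"
  shows "hterm b j * hterm b k = (-1) \<cdot>\<^sub>m (hterm b k * hterm b j)"
proof -
  have jk: "j \<in> V" "k \<in> V" using assms fadj_V by auto
  have "pauli_mat j * pauli_mat k = - (pauli_mat k * pauli_mat j)"
    using assms unfolding fadj_def anticommute_def by simp
  then have "hterm b j * hterm b k = (complex_of_real (b j) * complex_of_real (b k)) \<cdot>\<^sub>m ((-1) \<cdot>\<^sub>m (pauli_mat k * pauli_mat j))"
    using jk by (simp add: h_mult uminus_as_smult)
  also have "\<dots> = (-1) \<cdot>\<^sub>m ((complex_of_real (b k) * complex_of_real (b j)) \<cdot>\<^sub>m (pauli_mat k * pauli_mat j))"
    by (simp add: smult_smult_mat mult.commute)
  finally show ?thesis using jk by (simp add: h_mult)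
qed

lemma h_comm: assumes "j \<in> V" "k \<in> V" "\<not> fadj V j k"
  shows "hterm b j * hterm b k = hterm b k * hterm b j"
proof (cases "j = k")
  case False
  have lj: "length j = n" "length k = n" using assms lenV by auto
  have "psign j k \<noteq> -1"
  proof
    assume "psign j k = -1"
    then have "pauli_mat j * pauli_mat k = - (pauli_mat k * pauli_mat j)"
      using pauli_swap[OF lj] by (simp add: uminus_as_smult)
    then show False using assms False unfolding fadj_def anticommute_def by simp
  qed
  then have "psign j k = 1" using psign_cases by blast
  then show ?thesis using h_swap[OF assms(1,2)] by simp
next
  case True
  then show ?thesis by (simp only:)
qed

lemma h_sq: "j \<in> V \<Longrightarrow> hterm b j * hterm b j = complex_of_real ((b j)^2) \<cdot>\<^sub>m 1\<^sub>m (2^n)"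
  using lenV by (simp add: h_mult pauli_sq power2_eq_square)

lemma h_swap_gen: "j \<in> V \<Longrightarrow> k \<in> V \<Longrightarrow>
   hterm b j * hterm b k = (if fadj V j k then -1 else 1) \<cdot>\<^sub>m (hterm b k * hterm b j)"
  using h_anti h_comm by auto

lemma h_move_list:
  "j \<in> V \<Longrightarrow> set ys \<subseteq> V \<Longrightarrow> hterm b j * mat_prod_list (2^n) (map (hterm b) ys)
    = ((-1)^(length (filter (fadj V j) ys))) \<cdot>\<^sub>m (mat_prod_list (2^n) (map (hterm b) ys) * hterm b j)"
proof (induction ys)
  case Nil
  then show ?case by simp
next
  case (Cons y ys)
  let ?P = "mat_prod_list (2^n) (map (hterm b) ys)"
  let ?s = "(if fadj V j y then -1 else 1) :: complex"
  have cP: "?P \<in> carrier_mat (2^n) (2^n)" using Cons.prems by (intro mpl_carrier) auto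
  have cj: "hterm b j \<in> carrier_mat (2^n) (2^n)" "hterm b y \<in> carrier_mat (2^n) (2^n)" using Cons.prems by auto
  have sw: "hterm b j * hterm b y = ?s \<cdot>\<^sub>m (hterm b y * hterm b j)"
    using Cons.prems by (intro h_swap_gen) auto
  have IH: "hterm b j * ?P = ((-1)^(length (filter (fadj V j) ys))) \<cdot>\<^sub>m (?P * hterm b j)"
    using Cons by simp
  have "hterm b j * mat_prod_list (2^n) (map (hterm b) (y # ys)) = (hterm b j * hterm b y) * ?P"
    using cP cj by simp
  also have "\<dots> = (?s \<cdot>\<^sub>m (hterm b y * hterm b j)) * ?P" by (simp only: sw)
  also have "\<dots> = ?s \<cdot>\<^sub>m (hterm b y * (hterm b j * ?P))" using cP cj by simp
  also have "\<dots> = ?s \<cdot>\<^sub>m (hterm b y * (((-1)^(length (filter (fadj V j) ys))) \<cdot>\<^sub>m (?P * hterm b j)))"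
    by (simp only: IH)
  also have "\<dots> = (?s * (-1)^(length (filter (fadj V j) ys))) \<cdot>\<^sub>m (hterm b y * ?P * hterm b j)"
    using cP cj by simp
  also have "?s * (-1)^(length (filter (fadj V j) ys)) = (-1)^(length (filter (fadj V j) (y # ys)))"
    by simp
  finally show ?case by simp
qed

lemma indep_sub: "indep V S \<Longrightarrow> T \<subseteq> S \<Longrightarrow> indep V T"
  unfolding indep_def by blast

lemma indep_finite: "indep V S \<Longrightarrow> finite S"
  unfolding indep_def using finV finite_subset by blast

lemma comm_indep: "indep V S \<Longrightarrow> comm_on (2^n) (hterm b) S"
  unfolding comm_on_def indep_def by (auto intro!: h_comm)

lemma hs_carrier[simp]: "S \<subseteq> V \<Longrightarrow> h_set n b S \<in> carrier_mat (2^n) (2^n)"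
  unfolding h_set_def using finV finite_subset by (intro set_prod_carrier) auto

lemma h_move_set:
  assumes "j \<in> V" "indep V S"
  shows "hterm b j * h_set n b S = ((-1)^card {y\<in>S. fadj V j y}) \<cdot>\<^sub>m (h_set n b S * hterm b j)"
proof -
  obtain xs where xs: "distinct xs" "set xs = S" using indep_finite[OF assms(2)] finite_distinct_list by blast
  have e: "h_set n b S = mat_prod_list (2^n) (map (hterm b) xs)"
    unfolding h_set_def using xs comm_indep[OF assms(2)] by (rule set_prod_list)
  have "length (filter (fadj V j) xs) = card {y\<in>S. fadj V j y}"
    using xs by (simp add: distinct_length_filter Collect_conj_eq Int_commute)
  then show ?thesis unfolding e using h_move_list[OF assms(1)] xs assms(2) unfolding indep_def by auto
qed

lemma h_move_set0:
  assumes "j \<in> V" "indep V S" "\<forall>y\<in>S. \<not> fadj V j y"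
  shows "hterm b j * h_set n b S = h_set n b S * hterm b j"
proof -
  have e0: "{y\<in>S. fadj V j y} = {}" using assms(3) by auto
  have e: "card {y\<in>S. fadj V j y} = 0" unfolding e0 by simp
  show ?thesis using h_move_set[OF assms(1,2)] by (simp add: e)
qed

lemma h_set_comm:
  assumes "indep V S" "indep V T" "\<forall>x\<in>S. \<forall>y\<in>T. \<not> fadj V x y"
  shows "h_set n b S * h_set n b T = h_set n b T * h_set n b S"
proof -
  have "\<forall>y\<in>T. h_set n b S * hterm b y = hterm b y * h_set n b S"
    using assms h_move_set0 fadj_sym unfolding indep_def by (metis subsetD)
  then show ?thesis unfolding h_set_def[of n b T]
    using assms indep_finite comm_indep unfolding indep_def
    by (intro set_prod_comm) (auto simp: h_set_def[symmetric])
qed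

lemma h_set_union:
  assumes "indep V (S \<union> T)" "S \<inter> T = {}"
  shows "h_set n b (S \<union> T) = h_set n b S * h_set n b T"
  unfolding h_set_def using assms indep_finite indep_sub comm_indep
  by (intro set_prod_union) auto

lemma h_set_insert:
  assumes "indep V (insert x S)" "x \<notin> S"
  shows "h_set n b (insert x S) = hterm b x * h_set n b S"
  unfolding h_set_def using assms indep_finite indep_sub comm_indep
  by (intro set_prod_insert) auto

lemma h_set_single: "x \<in> V \<Longrightarrow> h_set n b {x} = hterm b x"
  using h_set_insert[of x "{}"] by (simp add: indep_def h_set_def right_mult_one_mat)

lemma h_set_sq:
  assumes "indep V K"
  shows "h_set n b K * h_set n b K = (\<Prod>j\<in>K. complex_of_real ((b j)^2)) \<cdot>\<^sub>m 1\<^sub>m (2^n)"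
proof -
  have "finite K" using assms indep_finite by blast
  then show ?thesis using assms
  proof (induction K rule: finite_induct)
    case empty
    then show ?case by (simp add: h_set_def)
  next
    case (insert x F)
    have iF: "indep V F" using insert.prems indep_sub by blast
    have xV: "x \<in> V" and FV: "F \<subseteq> V" using insert.prems unfolding indep_def by auto
    have c: "hterm b x \<in> carrier_mat (2^n) (2^n)" "h_set n b F \<in> carrier_mat (2^n) (2^n)"
      using xV FV by auto
    have com: "hterm b x * h_set n b F = h_set n b F * hterm b x"
      using insert.prems insert.hyps by (intro h_move_set0[OF xV iF]) (auto simp: indep_def)
    have "h_set n b (insert x F) * h_set n b (insert x F) = (hterm b x * h_set n b F) * (hterm b x * h_set n b F)"
      using insert.prems insert.hyps c by (simp add: h_set_insert)
    also have "\<dots> = hterm b x * ((h_set n b F * hterm b x) * h_set n b F)"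
      using c by simp
    also have "\<dots> = hterm b x * ((hterm b x * h_set n b F) * h_set n b F)"
      by (simp only: com)
    also have "\<dots> = (hterm b x * hterm b x) * (h_set n b F * h_set n b F)"
      using c by simp
    also have "\<dots> = (complex_of_real ((b x)^2) * (\<Prod>j\<in>F. complex_of_real ((b j)^2))) \<cdot>\<^sub>m 1\<^sub>m (2^n)"
      using insert iF xV by (simp add: h_sq ac_simps)
    finally show ?case using insert.hyps
      by (simp add: mult.commute[of "(complex_of_real (b x))\<^sup>2" "\<Prod>j\<in>F. (complex_of_real (b j))\<^sup>2"])
  qed
qed

end


context ham begin

definition cols :: "pauli list set \<Rightarrow> pauli list set set" where
  "cols W = {W1. W1 \<subseteq> W \<and> indep V W1 \<and> indep V (W - W1)}"

definition tm :: "pauli list set \<Rightarrow> pauli list set \<Rightarrow> complex mat" where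
  "tm W W1 = ((-1)^card W1) \<cdot>\<^sub>m (h_set n b W1 * h_set n b (W - W1))"

definition Fw :: "pauli list set \<Rightarrow> complex mat" where
  "Fw W = mat_sum (2^n) (tm W) (cols W)"

lemma comm_left: "B \<in> CD \<Longrightarrow> C \<in> CD \<Longrightarrow> D \<in> CD \<Longrightarrow> B * C = C * B \<Longrightarrow> B * (C * D) = C * (B * D)"
proof -
  assume c: "B \<in> CD" "C \<in> CD" "D \<in> CD" and e: "B * C = C * B"
  have "B * (C * D) = (B * C) * D" using c by simp
  also have "\<dots> = (C * B) * D" by (simp only: e)
  also have "\<dots> = C * (B * D)" using c by simp
  finally show ?thesis .
qed

lemma indep_insert: "indep V (insert v S) \<longleftrightarrow> v \<in> V \<and> indep V S \<and> (\<forall>y\<in>S. \<not> fadj V v y)"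
  unfolding indep_def using fadj_sym by auto

lemma indep_union: "indep V S \<Longrightarrow> indep V T \<Longrightarrow> (\<forall>x\<in>S. \<forall>y\<in>T. \<not> fadj V x y) \<Longrightarrow> indep V (S \<union> T)"
  unfolding indep_def using fadj_sym by blast

lemma indep_empty[simp]: "indep V {}"
  by (simp add: indep_def)

lemma hdim[simp]: "j \<in> V \<Longrightarrow> dim_row (hterm b j) = 2^n" "j \<in> V \<Longrightarrow> dim_col (hterm b j) = 2^n"
  using hc[of j] unfolding carrier_mat_def by auto

lemma h_set_empty[simp]: "h_set n b {} = 1\<^sub>m (2^n)"
  by (simp add: h_set_def)

lemma zeroLD[simp]: "A \<in> CD \<Longrightarrow> 0\<^sub>m (2^n) (2^n) * A = 0\<^sub>m (2^n) (2^n)"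
  by (rule left_mult_zero_mat)

lemma cols_finite: assumes "W \<subseteq> V" shows "finite (cols W)"
proof -
  from assms have "finite (Pow W)" using finV finite_subset by blast
  then show ?thesis unfolding cols_def by (rule rev_finite_subset) auto
qed

lemma tm_carrier: "W \<subseteq> V \<Longrightarrow> W1 \<in> cols W \<Longrightarrow> tm W W1 \<in> CD"
  unfolding tm_def cols_def indep_def by auto

lemma Fw_carrier[simp]: "Fw W \<in> CD"
  unfolding Fw_def by simp

lemma Fw_mult:
  assumes AV: "A \<subseteq> V" and BV: "B \<subseteq> V" and dis: "A \<inter> B = {}"
    and nab: "\<forall>x\<in>A. \<forall>y\<in>B. \<not> fadj V x y"
  shows "Fw (A \<union> B) = Fw A * Fw B"
proof -
  have nba: "\<forall>x\<in>B. \<forall>y\<in>A. \<not> fadj V x y" using nab fadj_sym by blast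
  have bij: "bij_betw (\<lambda>p. fst p \<union> snd p) (cols A \<times> cols B) (cols (A \<union> B))"
  proof (rule bij_betw_byWitness[where f'="\<lambda>W1. (W1 \<inter> A, W1 \<inter> B)"])
    show "\<forall>p\<in>cols A \<times> cols B. ((fst p \<union> snd p) \<inter> A, (fst p \<union> snd p) \<inter> B) = p"
      using dis unfolding cols_def by auto
    show "\<forall>W1\<in>cols (A \<union> B). fst (W1 \<inter> A, W1 \<inter> B) \<union> snd (W1 \<inter> A, W1 \<inter> B) = W1"
      unfolding cols_def by auto
    show "(\<lambda>p. fst p \<union> snd p) ` (cols A \<times> cols B) \<subseteq> cols (A \<union> B)"
    proof clarify
      fix A1 B1 assume a: "A1 \<in> cols A" "B1 \<in> cols B"
      have "indep V (A1 \<union> B1)" using a nab by (intro indep_union) (auto simp: cols_def)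
      moreover have "indep V ((A - A1) \<union> (B - B1))" using a nab by (intro indep_union) (auto simp: cols_def)
      moreover have "(A \<union> B) - (A1 \<union> B1) = (A - A1) \<union> (B - B1)" using dis a by (auto simp: cols_def)
      ultimately show "fst (A1, B1) \<union> snd (A1, B1) \<in> cols (A \<union> B)" using a by (auto simp: cols_def)
    qed
    show "(\<lambda>W1. (W1 \<inter> A, W1 \<inter> B)) ` cols (A \<union> B) \<subseteq> cols A \<times> cols B"
    proof (rule image_subsetI)
      fix W1 assume a: "W1 \<in> cols (A \<union> B)"
      have "A - W1 \<inter> A \<subseteq> (A \<union> B) - W1" "B - W1 \<inter> B \<subseteq> (A \<union> B) - W1" by auto
      then show "(W1 \<inter> A, W1 \<inter> B) \<in> cols A \<times> cols B"
        using a unfolding cols_def by (auto intro: indep_sub)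
    qed
  qed
  have "Fw A * Fw B = mat_sum (2^n) (\<lambda>p. tm A (fst p) * tm B (snd p)) (cols A \<times> cols B)"
    unfolding Fw_def using AV BV tm_carrier cols_finite by (intro ms_mult) auto
  also have "\<dots> = mat_sum (2^n) (\<lambda>p. tm (A \<union> B) (fst p \<union> snd p)) (cols A \<times> cols B)"
  proof (rule ms_cong[OF refl])
    fix p assume p: "p \<in> cols A \<times> cols B"
    obtain A1 B1 where pe: "p = (A1, B1)" by fastforce
    have a: "A1 \<in> cols A" "B1 \<in> cols B" using p pe by auto
    have sub: "A1 \<subseteq> V" "B1 \<subseteq> V" "A - A1 \<subseteq> V" "B - B1 \<subseteq> V" using a AV BV by (auto simp: cols_def)
    have i1: "indep V A1" "indep V B1" "indep V (A - A1)" "indep V (B - B1)" using a by (auto simp: cols_def)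
    have fin: "finite A1" "finite B1" using i1 indep_finite by auto
    have dA: "A1 \<inter> B1 = {}" "(A - A1) \<inter> (B - B1) = {}" using dis a by (auto simp: cols_def)
    have u1: "h_set n b (A1 \<union> B1) = h_set n b A1 * h_set n b B1"
      using i1 a nab dA by (intro h_set_union indep_union) (auto simp: cols_def)
    have u2: "h_set n b ((A - A1) \<union> (B - B1)) = h_set n b (A - A1) * h_set n b (B - B1)"
      using i1 a nab dA by (intro h_set_union indep_union) auto
    have com: "h_set n b B1 * h_set n b (A - A1) = h_set n b (A - A1) * h_set n b B1"
      using i1 a nba by (intro h_set_comm) (auto simp: cols_def)
    have eq: "(A \<union> B) - (A1 \<union> B1) = (A - A1) \<union> (B - B1)" using dis a by (auto simp: cols_def)
    have cd: "card (A1 \<union> B1) = card A1 + card B1" using fin dA by (simp add: card_Un_disjoint)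
    have "tm (A \<union> B) (A1 \<union> B1) = ((-1)^card A1 * (-1)^card B1) \<cdot>\<^sub>m
        (h_set n b A1 * (h_set n b B1 * (h_set n b (A - A1) * h_set n b (B - B1))))"
      unfolding tm_def eq u1 u2 cd using sub by (simp add: power_add)
    also have "\<dots> = ((-1)^card A1 * (-1)^card B1) \<cdot>\<^sub>m
        (h_set n b A1 * (h_set n b (A - A1) * (h_set n b B1 * h_set n b (B - B1))))"
      using sub com by (simp add: comm_left)
    also have "\<dots> = tm A A1 * tm B B1"
      unfolding tm_def using sub by (simp add: ac_simps)
    finally show "tm A (fst p) * tm B (snd p) = tm (A \<union> B) (fst p \<union> snd p)" using pe by simp
  qed
  also have "\<dots> = Fw (A \<union> B)"
    unfolding Fw_def by (rule ms_reindex[symmetric]) (rule bij)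
  finally show ?thesis by simp
qed

lemma Fw_single:
  assumes "v \<in> V"
  shows "Fw {v} = 0\<^sub>m (2^n) (2^n)"
proof -
  have c: "cols {v} = {{}, {v}}"
    unfolding cols_def using assms by (auto simp: indep_def)
  have t1: "tm {v} {} = hterm b v" using assms by (simp add: tm_def h_set_single)
  have t2: "tm {v} {v} = (-1) \<cdot>\<^sub>m hterm b v" using assms by (simp add: tm_def h_set_single)
  show ?thesis unfolding Fw_def c
    by (subst ms_two) (auto simp: t1 t2 assms intro!: eq_matI)
qed

lemma Fw_leaf:
  assumes WV: "W \<subseteq> V" and v: "v \<in> W" and N: "{y\<in>W. fadj V v y} = {w}"
  shows "Fw W = (-1) \<cdot>\<^sub>m (hterm b v * Fw (W - {v}))"
proof -
  have "w \<in> {y\<in>W. fadj V v y}" using N by simp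
  then have w: "w \<in> W" "fadj V v w" "w \<noteq> v" by auto
  have vV: "v \<in> V" using v WV by auto
  have onlyw: "y = w" if "y \<in> W" "fadj V v y" for y
  proof -
    have "y \<in> {y\<in>W. fadj V v y}" using that by simp
    then show ?thesis using N by simp
  qed
  let ?g = "\<lambda>W1'. if w \<in> W1' then W1' else insert v W1'"
  have gin: "?g W1' \<in> cols W" if a: "W1' \<in> cols (W - {v})" for W1'
  proof (cases "w \<in> W1'")
    case True
    have "W - W1' = insert v ((W - {v}) - W1')" using a v unfolding cols_def by auto
    moreover have "indep V (insert v ((W - {v}) - W1'))"
      unfolding indep_insert using a vV onlyw True by (auto simp: cols_def)
    ultimately show ?thesis using True a unfolding cols_def by auto
  next
    case False
    have "W - insert v W1' = (W - {v}) - W1'" by auto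
    moreover have "indep V (insert v W1')"
      unfolding indep_insert using a vV onlyw False by (auto simp: cols_def)
    ultimately show ?thesis using False a v unfolding cols_def by auto
  qed
  have bij: "bij_betw ?g (cols (W - {v})) (cols W)"
  proof (rule bij_betw_byWitness[where f'="\<lambda>W1. W1 - {v}"])
    show "\<forall>W1'\<in>cols (W - {v}). ?g W1' - {v} = W1'" unfolding cols_def by auto
    show "\<forall>W1\<in>cols W. ?g (W1 - {v}) = W1"
    proof
      fix W1 assume a: "W1 \<in> cols W"
      show "?g (W1 - {v}) = W1"
      proof (cases "w \<in> W1")
        case True
        then have "v \<notin> W1" using a w unfolding cols_def indep_def by auto
        then show ?thesis using True w by auto
      next
        case False
        then have "v \<in> W1" using a w v unfolding cols_def indep_def by auto
        then show ?thesis using False w by auto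
      qed
    qed
    show "?g ` cols (W - {v}) \<subseteq> cols W" by (rule image_subsetI) (rule gin)
    show "(\<lambda>W1. W1 - {v}) ` cols W \<subseteq> cols (W - {v})"
    proof clarify
      fix W1 assume a: "W1 \<in> cols W"
      have "(W - {v}) - (W1 - {v}) \<subseteq> W - W1" by auto
      then show "W1 - {v} \<in> cols (W - {v})" using a unfolding cols_def by (auto intro: indep_sub)
    qed
  qed
  have "Fw W = mat_sum (2^n) (\<lambda>W1'. tm W (?g W1')) (cols (W - {v}))"
    unfolding Fw_def by (rule ms_reindex) (rule bij)
  also have "\<dots> = mat_sum (2^n) (\<lambda>W1'. (-1) \<cdot>\<^sub>m (hterm b v * tm (W - {v}) W1')) (cols (W - {v}))"
  proof (rule ms_cong[OF refl])
    fix W1' assume a: "W1' \<in> cols (W - {v})"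
    have ga: "?g W1' \<in> cols W" using gin a .
    have i1: "indep V W1'" using a by (auto simp: cols_def)
    have sub: "W1' \<subseteq> V" "(W - {v}) - W1' \<subseteq> V" using a WV by (auto simp: cols_def)
    have vn: "v \<notin> W1'" using a by (auto simp: cols_def)
    have fin: "finite W1'" using i1 indep_finite by auto
    show "tm W (?g W1') = (-1) \<cdot>\<^sub>m (hterm b v * tm (W - {v}) W1')"
    proof (cases "w \<in> W1'")
      case True
      have e: "W - W1' = insert v ((W - {v}) - W1')" using a v unfolding cols_def by auto
      have hi: "h_set n b (insert v ((W - {v}) - W1')) = hterm b v * h_set n b ((W - {v}) - W1')"
        using ga True e by (intro h_set_insert) (auto simp: cols_def)
      have W1'W: "W1' \<subseteq> W" using a by (auto simp: cols_def)
      have "{y\<in>W1'. fadj V v y} = {w}" using W1'W onlyw True w(2) by blast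
      then have mv: "hterm b v * h_set n b W1' = (-1) \<cdot>\<^sub>m (h_set n b W1' * hterm b v)"
        using h_move_set[OF vV i1] by simp
      have "(-1) \<cdot>\<^sub>m (hterm b v * h_set n b W1') = h_set n b W1' * hterm b v"
        unfolding mv by simp
      then have mv2: "h_set n b W1' * hterm b v = (-1) \<cdot>\<^sub>m (hterm b v * h_set n b W1')" by simp
      have "tm W (?g W1') = (-1)^card W1' \<cdot>\<^sub>m ((h_set n b W1' * hterm b v) * h_set n b ((W - {v}) - W1'))"
        unfolding tm_def using True e hi sub vV by simp
      also have "\<dots> = (-1) \<cdot>\<^sub>m (hterm b v * tm (W - {v}) W1')"
        unfolding mv2 tm_def using sub vV by (simp add: mult.commute)
      finally show ?thesis .
    next
      case False
      have e: "W - insert v W1' = (W - {v}) - W1'" by auto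
      have hi: "h_set n b (insert v W1') = hterm b v * h_set n b W1'"
        using ga False vn by (intro h_set_insert) (auto simp: cols_def)
      show ?thesis unfolding tm_def using False e hi sub vV vn fin by simp
    qed
  qed
  also have "\<dots> = (-1) \<cdot>\<^sub>m (hterm b v * Fw (W - {v}))"
  proof -
    have WV': "W - {v} \<subseteq> V" using WV by auto
    have ct: "\<forall>x\<in>cols (W - {v}). tm (W - {v}) x \<in> CD" using tm_carrier[OF WV'] by auto
    then have ct2: "\<forall>x\<in>cols (W - {v}). hterm b v * tm (W - {v}) x \<in> CD" using vV by auto
    have "hterm b v * Fw (W - {v}) = mat_sum (2^n) (\<lambda>x. hterm b v * tm (W - {v}) x) (cols (W - {v}))"
      unfolding Fw_def using vV ct by (intro ms_mult_left) auto
    then show ?thesis using ms_smult[OF ct2, of "-1"] by simp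
  qed
  finally show ?thesis .
qed

lemma deg_le2:
  assumes WV: "W \<subseteq> V" and W1: "W1 \<in> cols W" and x: "x \<in> W"
  shows "card {y\<in>W. fadj V x y} \<le> 2"
proof (rule ccontr)
  assume "\<not> ?thesis"
  then have "3 \<le> card {y\<in>W. fadj V x y}" by simp
  then obtain T where T: "T \<subseteq> {y\<in>W. fadj V x y}" "card T = 3" by (meson obtain_subset_with_card_n)
  then obtain a c e where ace: "T = {a, c, e}" "a \<noteq> c" "c \<noteq> e" "a \<noteq> e" by (auto simp: card_3_iff)
  define S where "S = (if x \<in> W1 then W - W1 else W1)"
  have iS: "indep V S" using W1 unfolding S_def cols_def by auto
  have NS: "y \<in> S" if "y \<in> W" "fadj V x y" for y
  proof -
    have "x \<in> W1 \<Longrightarrow> y \<notin> W1" using W1 that unfolding cols_def indep_def by auto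
    moreover have "x \<notin> W1 \<Longrightarrow> y \<in> W1" using W1 that x unfolding cols_def indep_def by auto
    ultimately show ?thesis unfolding S_def using that by auto
  qed
  have "a \<in> S" "c \<in> S" "e \<in> S" using T ace NS by auto
  then have "\<not> fadj V a c" "\<not> fadj V a e" "\<not> fadj V c e" using iS unfolding indep_def by auto
  moreover have "fadj V x a" "fadj V x c" "fadj V x e" using T ace by auto
  ultimately show False using clawV ace unfolding claw_free_def by auto
qed

lemma Fw_vanish:
  "W \<subseteq> V \<Longrightarrow> v \<in> W \<Longrightarrow> card {y\<in>W. fadj V v y} \<le> 1 \<Longrightarrow> Fw W = 0\<^sub>m (2^n) (2^n)"
proof (induction "card W" arbitrary: W v rule: less_induct)
  case less
  note WV = less.prems(1) and v = less.prems(2) and dv = less.prems(3)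
  have finW: "finite W" using WV finV finite_subset by blast
  have vV: "v \<in> V" using WV v by auto
  show ?case
  proof (cases "cols W = {}")
    case True
    then show ?thesis unfolding Fw_def by simp
  next
    case False
    then obtain W1 where W1: "W1 \<in> cols W" by blast
    have finN: "finite {y\<in>W. fadj V v y}" using finW by simp
    show ?thesis
    proof (cases "card {y\<in>W. fadj V v y} = 0")
      case True
      then have N0: "\<forall>y\<in>W - {v}. \<not> fadj V v y" using finN by auto
      have "W = {v} \<union> (W - {v})" using v by auto
      moreover have "Fw ({v} \<union> (W - {v})) = Fw {v} * Fw (W - {v})"
        using WV vV N0 by (intro Fw_mult) auto
      ultimately have "Fw W = Fw {v} * Fw (W - {v})" by simp
      also have "\<dots> = 0\<^sub>m (2^n) (2^n)" using vV by (simp add: Fw_single)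
      finally show ?thesis .
    next
      case False
      then have "card {y\<in>W. fadj V v y} = 1" using dv by simp
      then obtain w where N: "{y\<in>W. fadj V v y} = {w}" by (meson card_1_singletonE)
      have "w \<in> {y\<in>W. fadj V v y}" using N by simp
      then have w: "w \<in> W" "fadj V v w" "w \<noteq> v" by auto
      have "card {y\<in>W. fadj V w y} \<le> 2" using deg_le2[OF WV W1 w(1)] .
      moreover have "v \<in> {y\<in>W. fadj V w y}" using w v fadj_sym by auto
      moreover have "{y\<in>W - {v}. fadj V w y} = {y\<in>W. fadj V w y} - {v}" by auto
      ultimately have "card {y\<in>W - {v}. fadj V w y} \<le> 1" using finW by (simp add: card_Diff_singleton)
      moreover have "card (W - {v}) < card W" using card_Diff1_less[OF finW v] .
      ultimately have "Fw (W - {v}) = 0\<^sub>m (2^n) (2^n)"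
        using less.hyps[of "W - {v}" w] WV w by auto
      then show ?thesis using Fw_leaf[OF WV v N] vV by simp
    qed
  qed
qed

lemma Fw_nonzero:
  assumes WV: "W \<subseteq> V" and nz: "Fw W \<noteq> 0\<^sub>m (2^n) (2^n)"
  shows "cols W \<noteq> {}" "\<forall>x\<in>W. card {y\<in>W. fadj V x y} = 2"
proof -
  show ne: "cols W \<noteq> {}" using nz unfolding Fw_def by auto
  then obtain W1 where W1: "W1 \<in> cols W" by blast
  show "\<forall>x\<in>W. card {y\<in>W. fadj V x y} = 2"
  proof
    fix x assume x: "x \<in> W"
    have "card {y\<in>W. fadj V x y} \<le> 2" using deg_le2[OF WV W1 x] .
    moreover have "\<not> card {y\<in>W. fadj V x y} \<le> 1" using Fw_vanish[OF WV x] nz by auto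
    ultimately show "card {y\<in>W. fadj V x y} = 2" by simp
  qed
qed

end


definition cyc :: "nat \<Rightarrow> nat \<Rightarrow> nat \<Rightarrow> bool" where
  "cyc L i k \<longleftrightarrow> k = Suc i mod L \<or> i = Suc k mod L"

lemma sucmod: "i < L \<Longrightarrow> Suc i mod L = (if Suc i = L then 0 else Suc i)"
  by auto

lemma cyc_sym: "cyc L i k = cyc L k i"
  unfolding cyc_def by auto

lemma cyc_parity:
  assumes "even L" "i < L" "k < L" "cyc L i k"
  shows "even i \<longleftrightarrow> odd k"
proof -
  have aux: "even i \<longleftrightarrow> odd k" if "k = Suc i mod L" "i < L" for i k
  proof (cases "Suc i = L")
    case True
    then have "k = 0" using that by simp
    moreover have "odd i" using True assms(1) by auto
    ultimately show ?thesis by simp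
  next
    case False
    then show ?thesis using that by (simp add: sucmod)
  qed
  show ?thesis using assms aux[of k i] aux[of i k] unfolding cyc_def by auto
qed

lemma cyc_succ: "Suc i < L \<Longrightarrow> cyc L i (Suc i)"
  unfolding cyc_def by simp

lemma cyc_last: "0 < L \<Longrightarrow> cyc L (L - 1) 0"
  unfolding cyc_def by simp

definition pr :: "nat \<Rightarrow> nat \<Rightarrow> nat" where
  "pr L i = (if i = 0 then L - 1 else i - 1)"

lemma cyc_iff: assumes "i < L" "k < L" shows "cyc L i k \<longleftrightarrow> k = Suc i mod L \<or> k = pr L i"
proof -
  have "i = Suc k mod L \<longleftrightarrow> k = pr L i"
    using assms by (cases "Suc k = L") (auto simp: sucmod pr_def)
  then show ?thesis unfolding cyc_def by blast
qed

lemma succ_ne_pr: "4 \<le> L \<Longrightarrow> i < L \<Longrightarrow> Suc i mod L \<noteq> pr L i"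
  by (cases "Suc i = L") (auto simp: sucmod pr_def)

lemma card_evens: "card {i. i < 2*m \<and> even i} = m"
proof -
  have "{i. i < 2*m \<and> even i} = (\<lambda>j. 2*j) ` {..<m}" by (auto elim!: evenE)
  then show ?thesis by (simp add: card_image inj_on_def)
qed

lemma card_odds: "card {i. i < 2*m \<and> odd i} = m"
proof -
  have "{i. i < 2*m \<and> odd i} = (\<lambda>j. 2*j+1) ` {..<m}" by (auto elim!: oddE)
  then show ?thesis by (simp add: card_image inj_on_def)
qed

context ham begin

definition hole_list :: "pauli list list \<Rightarrow> bool" where
  "hole_list vs \<longleftrightarrow> distinct vs \<and> set vs \<subseteq> V \<and> 4 \<le> length vs \<and> even (length vs) \<and>
     (\<forall>i<length vs. \<forall>k<length vs. fadj V (vs!i) (vs!k) \<longleftrightarrow> cyc (length vs) i k)"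

lemma even_hole_iff: "even_hole V C \<longleftrightarrow> (\<exists>vs. hole_list vs \<and> set vs = C)"
proof
  assume "even_hole V C"
  then obtain vs where "C \<subseteq> V" "card C \<ge> 4" "even (card C)" "distinct vs" "set vs = C"
      "\<forall>i<length vs. \<forall>k<length vs. fadj V (vs ! i) (vs ! k) \<longleftrightarrow> (k = Suc i mod length vs \<or> i = Suc k mod length vs)"
    unfolding even_hole_def by blast
  then show "\<exists>vs. hole_list vs \<and> set vs = C"
    unfolding hole_list_def cyc_def by (metis distinct_card)
next
  assume "\<exists>vs. hole_list vs \<and> set vs = C"
  then obtain vs where "hole_list vs" "set vs = C" by blast
  then show "even_hole V C" unfolding hole_list_def even_hole_def cyc_def
    by (metis distinct_card)
qed

definition EVN :: "pauli list list \<Rightarrow> pauli list set" where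
  "EVN vs = (\<lambda>i. vs ! i) ` {i. i < length vs \<and> even i}"
definition ODD :: "pauli list list \<Rightarrow> pauli list set" where
  "ODD vs = (\<lambda>i. vs ! i) ` {i. i < length vs \<and> odd i}"

lemma cols_adj: "W1 \<in> cols W \<Longrightarrow> x \<in> W \<Longrightarrow> y \<in> W \<Longrightarrow> fadj V x y \<Longrightarrow> (x \<in> W1 \<longleftrightarrow> y \<notin> W1)"
  unfolding cols_def indep_def by blast

lemma EO_facts:
  assumes "distinct vs"
  shows "EVN vs \<union> ODD vs = set vs" "EVN vs \<inter> ODD vs = {}" "set vs - EVN vs = ODD vs" "set vs - ODD vs = EVN vs"
    "EVN vs \<subseteq> set vs" "ODD vs \<subseteq> set vs"
proof -
  have inj: "vs ! i = vs ! k \<longleftrightarrow> i = k" if "i < length vs" "k < length vs" for i k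
    using assms that nth_eq_iff_index_eq by blast
  have sv: "set vs = (\<lambda>i. vs ! i) ` {i. i < length vs}" by (auto simp: set_conv_nth)
  show "EVN vs \<union> ODD vs = set vs" unfolding EVN_def ODD_def sv by auto
  show d: "EVN vs \<inter> ODD vs = {}" unfolding EVN_def ODD_def using inj by auto
  show "EVN vs \<subseteq> set vs" "ODD vs \<subseteq> set vs" unfolding EVN_def ODD_def sv by auto
  then show "set vs - EVN vs = ODD vs" "set vs - ODD vs = EVN vs" using d \<open>EVN vs \<union> ODD vs = set vs\<close> by auto
qed

lemma EE_indep: assumes "hole_list vs" shows "indep V (EVN vs)" "indep V (ODD vs)"
proof -
  have H: "distinct vs" "set vs \<subseteq> V" "even (length vs)"
    "\<And>i k. i < length vs \<Longrightarrow> k < length vs \<Longrightarrow> fadj V (vs!i) (vs!k) \<longleftrightarrow> cyc (length vs) i k"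
    using assms unfolding hole_list_def by auto
  show "indep V (EVN vs)"
    unfolding indep_def EVN_def using H cyc_parity[OF H(3)] by auto
  show "indep V (ODD vs)"
    unfolding indep_def ODD_def using H cyc_parity[OF H(3)] by auto
qed

lemma hole_alt:
  assumes "hole_list vs" "W1 \<in> cols (set vs)"
  shows "i < length vs \<Longrightarrow> (vs ! i \<in> W1 \<longleftrightarrow> (vs ! 0 \<in> W1 \<longleftrightarrow> even i))"
proof (induction i)
  case 0
  then show ?case by simp
next
  case (Suc i)
  have "fadj V (vs ! i) (vs ! Suc i)"
    using assms(1) Suc.prems cyc_succ[OF Suc.prems] unfolding hole_list_def by auto
  then have "vs ! i \<in> W1 \<longleftrightarrow> vs ! Suc i \<notin> W1"
    using cols_adj[OF assms(2)] Suc.prems by auto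
  then show ?case using Suc by auto
qed

lemma hole_cols:
  assumes H: "hole_list vs"
  shows "cols (set vs) = {EVN vs, ODD vs}"
proof
  have d: "distinct vs" using H unfolding hole_list_def by auto
  show "{EVN vs, ODD vs} \<subseteq> cols (set vs)"
    unfolding cols_def using EO_facts[OF d] EE_indep[OF H] by auto
  show "cols (set vs) \<subseteq> {EVN vs, ODD vs}"
  proof
    fix W1 assume W1: "W1 \<in> cols (set vs)"
    have sub: "W1 \<subseteq> set vs" using W1 unfolding cols_def by auto
    have alt: "\<And>i. i < length vs \<Longrightarrow> (vs ! i \<in> W1 \<longleftrightarrow> (vs ! 0 \<in> W1 \<longleftrightarrow> even i))"
      using hole_alt[OF H W1] by blast
    have sv: "\<And>x. x \<in> set vs \<Longrightarrow> \<exists>i<length vs. x = vs ! i" by (auto simp: in_set_conv_nth)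
    show "W1 \<in> {EVN vs, ODD vs}"
    proof (cases "vs ! 0 \<in> W1")
      case True
      have "W1 = EVN vs"
      proof
        show "W1 \<subseteq> EVN vs" unfolding EVN_def using sub sv alt True by fastforce
        show "EVN vs \<subseteq> W1" unfolding EVN_def using alt True by auto
      qed
      then show ?thesis by simp
    next
      case False
      have "W1 = ODD vs"
      proof
        show "W1 \<subseteq> ODD vs" unfolding ODD_def using sub sv alt False by fastforce
        show "ODD vs \<subseteq> W1" unfolding ODD_def using alt False by auto
      qed
      then show ?thesis by simp
    qed
  qed
qed

lemma EE_ne_OO: "hole_list vs \<Longrightarrow> EVN vs \<noteq> ODD vs"
proof -
  assume H: "hole_list vs"
  then have "vs ! 0 \<in> EVN vs" unfolding EVN_def hole_list_def by force
  moreover have "distinct vs" using H unfolding hole_list_def by auto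
  ultimately show ?thesis using EO_facts by blast
qed

lemma card_EE: assumes "hole_list vs" shows "card (EVN vs) = length vs div 2" "card (ODD vs) = length vs div 2"
proof -
  have d: "distinct vs" and ev: "even (length vs)" using assms unfolding hole_list_def by auto
  then obtain m where m: "length vs = 2 * m" by (auto elim: evenE)
  have inj: "inj_on (\<lambda>i. vs ! i) A" if "\<forall>i\<in>A. i < length vs" for A
    using d that by (simp add: inj_on_nth)
  show "card (EVN vs) = length vs div 2" unfolding EVN_def
    by (subst card_image) (use inj in auto, simp add: m card_evens)
  show "card (ODD vs) = length vs div 2" unfolding ODD_def
    by (subst card_image) (use inj in auto, simp add: m card_odds)
qed

lemma hole_nbrs:
  assumes H: "hole_list vs" and i: "i < length vs"
  shows "card {y\<in>set vs. fadj V (vs ! i) y} = 2"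
proof -
  let ?L = "length vs"
  have d: "distinct vs" and L4: "4 \<le> ?L" using H unfolding hole_list_def by auto
  have adj: "\<And>k. k < ?L \<Longrightarrow> fadj V (vs!i) (vs!k) \<longleftrightarrow> cyc ?L i k" using H i unfolding hole_list_def by auto
  have "{y\<in>set vs. fadj V (vs ! i) y} = (\<lambda>k. vs ! k) ` {Suc i mod ?L, pr ?L i}"
  proof
    show "{y\<in>set vs. fadj V (vs ! i) y} \<subseteq> (\<lambda>k. vs ! k) ` {Suc i mod ?L, pr ?L i}"
    proof
      fix y assume "y \<in> {y\<in>set vs. fadj V (vs ! i) y}"
      then obtain k where k: "k < ?L" "y = vs ! k" "fadj V (vs ! i) (vs ! k)" by (auto simp: in_set_conv_nth)
      then have "k = Suc i mod ?L \<or> k = pr ?L i" using adj cyc_iff[OF i k(1)] by auto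
      then show "y \<in> (\<lambda>k. vs ! k) ` {Suc i mod ?L, pr ?L i}" using k by auto
    qed
    have p: "pr ?L i < ?L" using i by (auto simp: pr_def)
    have L0: "0 < ?L" using i by linarith
    have s: "Suc i mod ?L < ?L" using L0 by simp
    show "(\<lambda>k. vs ! k) ` {Suc i mod ?L, pr ?L i} \<subseteq> {y\<in>set vs. fadj V (vs ! i) y}"
      using adj[OF p] adj[OF s] cyc_iff[OF i p] cyc_iff[OF i s] p s by auto
  qed
  moreover have "card ((\<lambda>k. vs ! k) ` {Suc i mod ?L, pr ?L i}) = 2"
  proof -
    have L0: "0 < ?L" using i by linarith
    have "inj_on (\<lambda>k. vs ! k) {Suc i mod ?L, pr ?L i}" using d i L0 by (intro inj_on_nth) (auto simp: pr_def)
    then show ?thesis using succ_ne_pr[OF L4 i] by (simp add: card_image)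
  qed
  ultimately show ?thesis by simp
qed

lemma hole_EO_comm:
  assumes H: "hole_list vs"
  shows "h_set n b (EVN vs) * h_set n b (ODD vs) = h_set n b (ODD vs) * h_set n b (EVN vs)"
proof -
  have d: "distinct vs" and sV: "set vs \<subseteq> V" using H unfolding hole_list_def by auto
  note EO = EO_facts[OF d]
  have iE: "indep V (EVN vs)" and iO: "indep V (ODD vs)" using EE_indep[OF H] by auto
  have x2: "h_set n b (ODD vs) * hterm b x = hterm b x * h_set n b (ODD vs)" if x: "x \<in> EVN vs" for x
  proof -
    obtain i where i: "i < length vs" "even i" "x = vs ! i" using x unfolding EVN_def by auto
    have xV: "x \<in> V" using x EO sV by auto
    have "{y\<in>ODD vs. fadj V x y} = {y\<in>set vs. fadj V x y}"
    proof -
      have "y \<notin> EVN vs" if "y \<in> EVN vs" "fadj V x y" for y using iE x that unfolding indep_def by auto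
      then show ?thesis using EO by blast
    qed
    then have "card {y\<in>ODD vs. fadj V x y} = 2" using hole_nbrs[OF H i(1)] i by simp
    then show ?thesis using h_move_set[OF xV iO] by simp
  qed
  have "h_set n b (ODD vs) * set_prod (2^n) (hterm b) (EVN vs) = set_prod (2^n) (hterm b) (EVN vs) * h_set n b (ODD vs)"
    using iE indep_finite comm_indep x2 sV EO by (intro set_prod_comm) auto
  then show ?thesis unfolding h_set_def by simp
qed

lemma h_hole_eq:
  assumes H: "hole_list vs"
  shows "h_hole n V b (set vs) = h_set n b (EVN vs) * h_set n b (ODD vs)"
proof -
  have d: "distinct vs" using H unfolding hole_list_def by auto
  note EO = EO_facts[OF d]
  define P where "P = (\<lambda>(Ca, Cb). Ca \<union> Cb = set vs \<and> Ca \<inter> Cb = {} \<and> indep V Ca \<and> indep V Cb)"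
  have P0: "P (EVN vs, ODD vs)" unfolding P_def using EO EE_indep[OF H] by auto
  define p where "p = (SOME p. P p)"
  have sP: "P p" unfolding p_def using P0 by (rule someI)
  have hh: "h_hole n V b (set vs) = (case p of (Ca, Cb) \<Rightarrow> h_set n b Ca * h_set n b Cb)"
    unfolding h_hole_def p_def P_def by (simp add: Let_def)
  then have hh: "h_hole n V b (set vs) = h_set n b (fst p) * h_set n b (snd p)"
    by (simp add: split_beta)
  have pP: "fst p \<union> snd p = set vs" "fst p \<inter> snd p = {}" "indep V (fst p)" "indep V (snd p)"
    using sP unfolding P_def by (simp_all add: split_beta)
  have sd: "set vs - fst p = snd p" using pP(1,2) by auto
  have "fst p \<in> cols (set vs)" unfolding cols_def using pP sd by auto
  then have "fst p = EVN vs \<or> fst p = ODD vs" using hole_cols[OF H] by auto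
  moreover have "snd p = set vs - fst p" using sd by simp
  ultimately show ?thesis using hh EO hole_EO_comm[OF H] by auto
qed

lemma Fw_hole:
  assumes H: "hole_list vs"
  shows "Fw (set vs) = (2 * (-1)^(length vs div 2)) \<cdot>\<^sub>m h_hole n V b (set vs)"
proof -
  have d: "distinct vs" and sV: "set vs \<subseteq> V" using H unfolding hole_list_def by auto
  note EO = EO_facts[OF d]
  have cE: "h_set n b (EVN vs) \<in> CD" "h_set n b (ODD vs) \<in> CD" using EO sV by auto
  have t1: "tm (set vs) (EVN vs) = (-1)^(length vs div 2) \<cdot>\<^sub>m (h_set n b (EVN vs) * h_set n b (ODD vs))"
    unfolding tm_def using EO card_EE[OF H] by simp
  have t2: "tm (set vs) (ODD vs) = (-1)^(length vs div 2) \<cdot>\<^sub>m (h_set n b (EVN vs) * h_set n b (ODD vs))"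
    unfolding tm_def using EO card_EE[OF H] hole_EO_comm[OF H] by simp
  show ?thesis unfolding Fw_def hole_cols[OF H] h_hole_eq[OF H]
    using EE_ne_OO[OF H] cE
    by (subst ms_two) (auto simp: t1 t2 intro!: eq_matI)
qed

end


context ham begin

lemma Fw_zero_mult_right: "A \<in> CD \<Longrightarrow> A * 0\<^sub>m (2^n) (2^n) = 0\<^sub>m (2^n) (2^n)"
  by (rule right_mult_zero_mat)

lemma find_hole:
  assumes WV: "W \<subseteq> V" and W1: "W1 \<in> cols W" and deg: "\<forall>x\<in>W. card {y\<in>W. fadj V x y} = 2"
    and v: "v \<in> W"
  shows "\<exists>ps. hole_list ps \<and> set ps \<subseteq> W \<and> (\<forall>x\<in>set ps. \<forall>y\<in>W. fadj V x y \<longrightarrow> y \<in> set ps)"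
proof -
  have finW: "finite W" using WV finV finite_subset by blast
  define PP where "PP = (\<lambda>ps. distinct ps \<and> set ps \<subseteq> W \<and> ps \<noteq> [] \<and>
      (\<forall>i. Suc i < length ps \<longrightarrow> fadj V (ps ! i) (ps ! Suc i)))"
  have P1: "PP [v]" unfolding PP_def using v by auto
  have bnd: "\<forall>ps. PP ps \<longrightarrow> length ps < card W + 1"
  proof (intro allI impI)
    fix ps assume "PP ps"
    then have "card (set ps) \<le> card W" "length ps = card (set ps)" unfolding PP_def
      using finW by (auto intro: card_mono simp: distinct_card[symmetric])
    then show "length ps < card W + 1" by simp
  qed
  obtain ps where ps: "PP ps" and mx: "\<forall>qs. PP qs \<longrightarrow> length qs \<le> length ps"
    using ex_has_greatest_nat[of PP "[v]" length "card W + 1"] P1 bnd by blast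
  define L where "L = length ps"
  have d: "distinct ps" and sW: "set ps \<subseteq> W" and ne: "ps \<noteq> []"
    and padj: "\<And>i. Suc i < L \<Longrightarrow> fadj V (ps ! i) (ps ! Suc i)"
    using ps unfolding PP_def L_def by auto
  have L0: "0 < L" using ne L_def by simp
  have inW: "\<And>i. i < L \<Longrightarrow> ps ! i \<in> W" using sW L_def by auto
  have inj: "\<And>i k. i < L \<Longrightarrow> k < L \<Longrightarrow> ps ! i = ps ! k \<longleftrightarrow> i = k"
    using d L_def nth_eq_iff_index_eq by blast
  define p where "p = ps ! (L - 1)"
  have pW: "p \<in> W" using inW L0 p_def by simp
  \<comment> \<open>maximality: all neighbours of the last vertex lie on the path\<close>
  have closed_last: "y \<in> set ps" if "y \<in> W" "fadj V p y" for y
  proof (rule ccontr)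
    assume ny: "y \<notin> set ps"
    have "PP (ps @ [y])" unfolding PP_def
    proof (intro conjI allI impI)
      show "distinct (ps @ [y])" using d ny by simp
      show "set (ps @ [y]) \<subseteq> W" using sW that by simp
      show "ps @ [y] \<noteq> []" by simp
      fix i assume i: "Suc i < length (ps @ [y])"
      show "fadj V ((ps @ [y]) ! i) ((ps @ [y]) ! Suc i)"
      proof (cases "Suc i < L")
        case True
        then show ?thesis using padj[OF True] L_def by (simp add: nth_append)
      next
        case False
        then have "i = L - 1" "Suc i = L" using i L_def by auto
        then show ?thesis using that p_def L_def by (simp add: nth_append)
      qed
    qed
    then show False using mx L_def by fastforce
  qed
  define N where "N = (\<lambda>x. {y\<in>W. fadj V x y})"
  have cN: "\<And>x. x \<in> W \<Longrightarrow> card (N x) = 2" using deg N_def by auto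
  have finN: "\<And>x. finite (N x)" using finW N_def by auto
  obtain q where q: "q \<in> N p" "L \<ge> 2 \<longrightarrow> q \<noteq> ps ! (L - 2)"
  proof -
    have "card (N p) = 2" using cN pW by simp
    then obtain a c where "N p = {a, c}" "a \<noteq> c" by (meson card_2_iff)
    then show ?thesis using that by (cases "L \<ge> 2 \<and> a = ps ! (L - 2)") auto
  qed
  have qW: "q \<in> W" "fadj V p q" using q N_def by auto
  then have "q \<in> set ps" using closed_last by auto
  then obtain i where i: "i < L" "q = ps ! i" using L_def by (auto simp: in_set_conv_nth)
  have "i \<noteq> L - 1" using qW i p_def fadj_irrefl by auto
  moreover have "i \<noteq> L - 2 \<or> L < 2" using q i by auto
  ultimately have iL: "i + 2 < L" using i by auto
  have i0: "i = 0"
  proof (rule ccontr)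
    assume "i \<noteq> 0"
    have s3: "{ps ! (i - 1), ps ! Suc i, p} \<subseteq> N (ps ! i)"
    proof -
      have "fadj V (ps ! (i - 1)) (ps ! i)" using padj[of "i - 1"] \<open>i \<noteq> 0\<close> iL by simp
      moreover have "fadj V (ps ! i) (ps ! Suc i)" using padj[of i] iL by simp
      moreover have "fadj V (ps ! i) p" using qW i fadj_sym by auto
      ultimately show ?thesis unfolding N_def using inW iL pW fadj_sym by auto
    qed
    have "card {ps ! (i - 1), ps ! Suc i, p} = 3"
      using inj iL \<open>i \<noteq> 0\<close> p_def by (auto simp: card_insert_if)
    moreover have "card {ps ! (i - 1), ps ! Suc i, p} \<le> 2"
      using card_mono[OF finN s3] cN inW iL by simp
    ultimately show False by simp
  qed
  have L3: "3 \<le> L" using iL by simp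
  have close: "fadj V p (ps ! 0)" using qW i i0 by simp
  have cadj: "fadj V (ps ! j) (ps ! (Suc j mod L))" if j: "j < L" for j
  proof (cases "Suc j = L")
    case True
    then show ?thesis using close p_def by auto
  next
    case False
    then show ?thesis using padj[of j] j by simp
  qed
  have cadj2: "fadj V (ps ! j) (ps ! pr L j)" if j: "j < L" for j
  proof (cases "j = 0")
    case True
    then show ?thesis using close p_def fadj_sym by (simp add: pr_def)
  next
    case False
    then show ?thesis using padj[of "j - 1"] j fadj_sym by (simp add: pr_def)
  qed
  have L4: "4 \<le> L \<or> L = 3" using L3 by auto
  have Nj: "N (ps ! j) = {ps ! (Suc j mod L), ps ! pr L j}" if j: "j < L" for j
  proof -
    have ss: "{ps ! (Suc j mod L), ps ! pr L j} \<subseteq> N (ps ! j)"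
      unfolding N_def using cadj[OF j] cadj2[OF j] inW j L0 by (auto simp: pr_def)
    have "Suc j mod L \<noteq> pr L j" using j L3 by (cases "Suc j = L") (auto simp: sucmod pr_def)
    moreover have "Suc j mod L < L" "pr L j < L" using j L0 by (auto simp: pr_def)
    ultimately have "card {ps ! (Suc j mod L), ps ! pr L j} = 2" using inj by auto
    then show ?thesis using card_subset_eq[OF finN ss] cN inW j by simp
  qed
  have closed: "\<forall>x\<in>set ps. \<forall>y\<in>W. fadj V x y \<longrightarrow> y \<in> set ps"
  proof (intro ballI impI)
    fix x y assume x: "x \<in> set ps" and y: "y \<in> W" and a: "fadj V x y"
    obtain j where j: "j < L" "x = ps ! j" using x L_def by (auto simp: in_set_conv_nth)
    have "y \<in> N (ps ! j)" using y a j N_def by auto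
    then show "y \<in> set ps" using Nj[OF j(1)] j L0 L_def by (auto simp: pr_def)
  qed
  have alt: "j < L \<Longrightarrow> (ps ! j \<in> W1 \<longleftrightarrow> (ps ! 0 \<in> W1 \<longleftrightarrow> even j))" for j
  proof (induction j)
    case 0
    then show ?case by simp
  next
    case (Suc j)
    have "ps ! j \<in> W1 \<longleftrightarrow> ps ! Suc j \<notin> W1"
      using cols_adj[OF W1] padj[OF Suc.prems] inW Suc.prems by auto
    then show ?case using Suc by auto
  qed
  have "p \<in> W1 \<longleftrightarrow> ps ! 0 \<notin> W1" using cols_adj[OF W1] close pW inW L0 by auto
  then have evL: "even L" using alt[of "L - 1"] L0 p_def by auto
  have hl: "hole_list ps" unfolding hole_list_def
  proof (intro conjI allI impI)
    show "distinct ps" by (rule d)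
    show "set ps \<subseteq> V" using sW WV by auto
    show "4 \<le> length ps" using L3 evL L_def by presburger
    show "even (length ps)" using evL L_def by simp
  next
    fix j k assume j: "j < length ps" and k: "k < length ps"
    have "fadj V (ps ! j) (ps ! k) \<longleftrightarrow> ps ! k \<in> N (ps ! j)" using inW k L_def N_def by auto
    also have "\<dots> \<longleftrightarrow> k = Suc j mod L \<or> k = pr L j"
      using Nj j inj k L0 L_def by (auto simp: pr_def)
    also have "\<dots> \<longleftrightarrow> cyc L j k" using cyc_iff j k L_def by simp
    finally show "fadj V (ps ! j) (ps ! k) \<longleftrightarrow> cyc (length ps) j k" using L_def by simp
  qed
  show ?thesis using hl sW closed by blast
qed

end


context ham begin

lemma hole_sub: "even_hole V C \<Longrightarrow> C \<subseteq> V"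
  unfolding even_hole_def by auto

lemma config_sub: "X \<in> even_hole_configs V \<Longrightarrow> C \<in> X \<Longrightarrow> C \<subseteq> V"
  unfolding even_hole_configs_def using hole_sub by blast

lemma config_finite: "X \<in> even_hole_configs V \<Longrightarrow> finite X"
proof -
  assume "X \<in> even_hole_configs V"
  then have "X \<subseteq> Pow V" using config_sub by blast
  then show "finite X" using finV by (meson finite_Pow_iff finite_subset)
qed

lemma config_Union_sub: "X \<in> even_hole_configs V \<Longrightarrow> \<Union>X \<subseteq> V"
  using config_sub by blast

lemma configs_finite: "finite (even_hole_configs V)"
proof -
  have "even_hole_configs V \<subseteq> Pow (Pow V)" using config_sub by blast
  then show ?thesis using finV by (meson finite_Pow_iff finite_subset)
qed

lemma h_hole_carrier: "even_hole V C \<Longrightarrow> h_hole n V b C \<in> CD"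
proof -
  assume "even_hole V C"
  then obtain vs where H: "hole_list vs" "set vs = C" using even_hole_iff by blast
  have "EVN vs \<subseteq> V" "ODD vs \<subseteq> V" using H EO_facts[of vs] unfolding hole_list_def by auto
  then show ?thesis using h_hole_eq[OF H(1)] H(2) by simp
qed

lemma comm4: "a \<in> CD \<Longrightarrow> c \<in> CD \<Longrightarrow> e \<in> CD \<Longrightarrow> f \<in> CD \<Longrightarrow>
  a * e = e * a \<Longrightarrow> a * f = f * a \<Longrightarrow> c * e = e * c \<Longrightarrow> c * f = f * c \<Longrightarrow>
  (a * c) * (e * f) = (e * f) * (a * c)"
proof -
  assume c: "a \<in> CD" "c \<in> CD" "e \<in> CD" "f \<in> CD" and
    ae: "a * e = e * a" and af: "a * f = f * a" and ce: "c * e = e * c" and cf: "c * f = f * c"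
  have "(a * c) * (e * f) = a * (c * (e * f))" using c by simp
  also have "c * (e * f) = e * (c * f)" using c ce by (simp add: comm_left)
  also have "a * (e * (c * f)) = e * (a * (c * f))" using c ae by (simp add: comm_left)
  also have "c * f = f * c" by (rule cf)
  also have "a * (f * c) = f * (a * c)" using c af by (simp add: comm_left)
  also have "e * (f * (a * c)) = (e * f) * (a * c)" using c by simp
  finally show ?thesis .
qed

lemma h_hole_comm:
  assumes "even_hole V C" "even_hole V D" "compatible V C D"
  shows "h_hole n V b C * h_hole n V b D = h_hole n V b D * h_hole n V b C"
proof -
  obtain vs where H: "hole_list vs" "set vs = C" using assms(1) even_hole_iff by blast
  obtain ws where K: "hole_list ws" "set ws = D" using assms(2) even_hole_iff by blast
  have dv: "distinct vs" "distinct ws" using H K unfolding hole_list_def by auto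
  have nadj: "\<forall>x\<in>C. \<forall>y\<in>D. \<not> fadj V x y" using assms(3) unfolding compatible_def by auto
  have sub: "EVN vs \<subseteq> C" "ODD vs \<subseteq> C" "EVN ws \<subseteq> D" "ODD ws \<subseteq> D"
    using EO_facts[OF dv(1)] EO_facts[OF dv(2)] H K by auto
  have ind: "indep V (EVN vs)" "indep V (ODD vs)" "indep V (EVN ws)" "indep V (ODD ws)"
    using EE_indep[OF H(1)] EE_indep[OF K(1)] by auto
  have CV: "C \<subseteq> V" "D \<subseteq> V" using assms hole_sub by auto
  have cm: "\<And>S T. S \<subseteq> C \<Longrightarrow> T \<subseteq> D \<Longrightarrow> indep V S \<Longrightarrow> indep V T \<Longrightarrow>
      h_set n b S * h_set n b T = h_set n b T * h_set n b S"
    using nadj by (intro h_set_comm) auto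
  show ?thesis unfolding h_hole_eq[OF H(1), unfolded H(2)] h_hole_eq[OF K(1), unfolded K(2)]
    using sub ind CV by (intro comm4 cm) auto
qed

lemma Fw_config:
  assumes "X \<in> even_hole_configs V"
  shows "Fw (\<Union>X) = (2 ^ card X * (-1) ^ (card (\<Union>X) div 2)) \<cdot>\<^sub>m set_prod (2^n) (h_hole n V b) X
     \<and> even (card (\<Union>X))"
proof -
  have "finite X" using assms config_finite by blast
  then show ?thesis using assms
  proof (induction X rule: finite_induct)
    case empty
    have "Fw {} = 1\<^sub>m (2^n)"
    proof -
      have "cols {} = {{}}" unfolding cols_def by auto
      moreover have "tm {} {} = 1\<^sub>m (2^n)" unfolding tm_def by simp
      moreover have "mat_sum (2^n) f {a} = f a" if "f a \<in> CD" for f and a :: "pauli list set"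
        using that by (intro eq_matI) (auto simp: ms_index)
      ultimately show ?thesis unfolding Fw_def by simp
    qed
    then show ?case by simp
  next
    case (insert C X)
    have cfg: "X \<in> even_hole_configs V" using insert.prems unfolding even_hole_configs_def by auto
    have hC: "even_hole V C" using insert.prems unfolding even_hole_configs_def by auto
    have comp: "\<forall>D\<in>X. compatible V C D" using insert.prems insert.hyps unfolding even_hole_configs_def by auto
    then have dis: "C \<inter> \<Union>X = {}" and nadj: "\<forall>x\<in>C. \<forall>y\<in>\<Union>X. \<not> fadj V x y"
      unfolding compatible_def by auto
    have IH: "Fw (\<Union>X) = (2 ^ card X * (-1) ^ (card (\<Union>X) div 2)) \<cdot>\<^sub>m set_prod (2^n) (h_hole n V b) X"
      "even (card (\<Union>X))" using insert.IH cfg by auto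
    obtain vs where H: "hole_list vs" "set vs = C" using hC even_hole_iff by blast
    have lc: "length vs = card C" using H unfolding hole_list_def by (auto simp: distinct_card)
    have evC: "even (card C)" using H lc unfolding hole_list_def by auto
    have CV: "C \<subseteq> V" "\<Union>X \<subseteq> V" using hC hole_sub config_Union_sub[OF cfg] by auto
    have finU: "finite C" "finite (\<Union>X)" using finite_subset[OF CV(1) finV] finite_subset[OF CV(2) finV] by auto
    have FC: "Fw C = (2 * (-1)^(card C div 2)) \<cdot>\<^sub>m h_hole n V b C"
      using Fw_hole[OF H(1)] H(2) lc by simp
    have co: "comm_on (2^n) (h_hole n V b) (insert C X)"
      unfolding comm_on_def
    proof (intro conjI ballI)
      fix D assume "D \<in> insert C X"
      then show "h_hole n V b D \<in> CD" using insert.prems h_hole_carrier unfolding even_hole_configs_def by auto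
    next
      fix D E assume D: "D \<in> insert C X" and E: "E \<in> insert C X"
      show "h_hole n V b D * h_hole n V b E = h_hole n V b E * h_hole n V b D"
      proof (cases "D = E")
        case False
        have "even_hole V D" "even_hole V E" "compatible V D E"
          using insert.prems D E False unfolding even_hole_configs_def by blast+
        then show ?thesis by (rule h_hole_comm)
      qed simp
    qed
    have sp: "set_prod (2^n) (h_hole n V b) (insert C X) = h_hole n V b C * set_prod (2^n) (h_hole n V b) X"
      using insert.hyps co by (intro set_prod_insert) auto
    have cX: "set_prod (2^n) (h_hole n V b) X \<in> CD"
      using co insert.hyps unfolding comm_on_def by (intro set_prod_carrier) auto
    have cC: "h_hole n V b C \<in> CD" using h_hole_carrier hC by auto
    have U: "\<Union>(insert C X) = C \<union> \<Union>X" by simp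
    have cardU: "card (C \<union> \<Union>X) = card C + card (\<Union>X)" using finU dis by (simp add: card_Un_disjoint)
    have dv: "(card C + card (\<Union>X)) div 2 = card C div 2 + card (\<Union>X) div 2"
      using evC IH(2) by (auto elim!: evenE)
    have "Fw (\<Union>(insert C X)) = Fw C * Fw (\<Union>X)"
      unfolding U using CV dis nadj by (intro Fw_mult) auto
    also have "\<dots> = ((2 * (-1)^(card C div 2)) * (2 ^ card X * (-1) ^ (card (\<Union>X) div 2))) \<cdot>\<^sub>m
        (h_hole n V b C * set_prod (2^n) (h_hole n V b) X)"
      unfolding FC IH(1) using cC cX by (simp add: ac_simps)
    also have "\<dots> = (2 ^ card (insert C X) * (-1) ^ (card (\<Union>(insert C X)) div 2)) \<cdot>\<^sub>m
        set_prod (2^n) (h_hole n V b) (insert C X)"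
      unfolding sp U cardU dv using insert.hyps by (simp add: power_add ac_simps)
    finally show ?case using U cardU evC IH(2) by simp
  qed
qed

lemma hole_closed_conn:
  assumes H: "hole_list vs" and sU: "set vs \<subseteq> U"
    and cl: "\<forall>y\<in>D. \<forall>z\<in>U. fadj V y z \<longrightarrow> z \<in> D" and j: "j < length vs" "vs ! j \<in> D"
  shows "set vs \<subseteq> D"
proof -
  let ?L = "length vs"
  have L0: "0 < ?L" using j by linarith
  have adj: "\<And>a. a < ?L \<Longrightarrow> fadj V (vs ! a) (vs ! (Suc a mod ?L))"
    using H L0 unfolding hole_list_def cyc_def by auto
  have step: "vs ! ((j + m) mod ?L) \<in> D" for m
  proof (induction m)
    case 0
    then show ?case using j by simp
  next
    case (Suc m)
    have a: "(j + m) mod ?L < ?L" using L0 by simp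
    have "(j + Suc m) mod ?L = Suc ((j + m) mod ?L) mod ?L" by (simp add: mod_Suc_eq)
    moreover have "vs ! (Suc ((j + m) mod ?L) mod ?L) \<in> U" using sU L0 by auto
    ultimately show ?case using cl Suc adj[OF a] by auto
  qed
  show ?thesis
  proof
    fix x assume "x \<in> set vs"
    then obtain i where i: "i < ?L" "x = vs ! i" by (auto simp: in_set_conv_nth)
    have "(j + (?L - j + i)) mod ?L = i" using i j by simp
    then show "x \<in> D" using step[of "?L - j + i"] i by simp
  qed
qed

lemma config_closed: "Y \<in> even_hole_configs V \<Longrightarrow> D \<in> Y \<Longrightarrow> \<forall>y\<in>D. \<forall>z\<in>\<Union>Y. fadj V y z \<longrightarrow> z \<in> D"
  unfolding even_hole_configs_def compatible_def by blast

lemma config_sub_other: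
  assumes X: "X \<in> even_hole_configs V" and Y: "Y \<in> even_hole_configs V" and U: "\<Union>X = \<Union>Y"
    and C: "C \<in> X"
  shows "C \<in> Y"
proof -
  have hC: "even_hole V C" using X C unfolding even_hole_configs_def by auto
  obtain vs where H: "hole_list vs" "set vs = C" using hC even_hole_iff by blast
  have L: "0 < length vs" using H unfolding hole_list_def by auto
  have "vs ! 0 \<in> C" using H L by auto
  then have "vs ! 0 \<in> \<Union>X" using C by blast
  then have "vs ! 0 \<in> \<Union>Y" using U by simp
  then obtain D where D: "D \<in> Y" "vs ! 0 \<in> D" by auto
  have hD: "even_hole V D" using Y D unfolding even_hole_configs_def by auto
  obtain ws where K: "hole_list ws" "set ws = D" using hD even_hole_iff by blast
  have "C \<subseteq> D" using hole_closed_conn[OF H(1), of "\<Union>Y" D 0] H C U D config_closed[OF Y D(1)] L by auto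
  moreover have "D \<subseteq> C"
  proof -
    have "vs ! 0 \<in> set ws" using D K by simp
    then obtain j where j: "j < length ws" "ws ! j = vs ! 0" by (auto simp: in_set_conv_nth)
    have "vs ! 0 \<in> C" using H L by auto
    then show ?thesis using hole_closed_conn[OF K(1), of "\<Union>X" C j] K D U C j config_closed[OF X C] by auto
  qed
  ultimately show ?thesis using D by auto
qed

lemma config_inj: "X \<in> even_hole_configs V \<Longrightarrow> Y \<in> even_hole_configs V \<Longrightarrow> \<Union>X = \<Union>Y \<Longrightarrow> X = Y"
  using config_sub_other by blast

lemma Fw_nonzero_config:
  "W \<subseteq> V \<Longrightarrow> Fw W \<noteq> 0\<^sub>m (2^n) (2^n) \<Longrightarrow> \<exists>X\<in>even_hole_configs V. \<Union>X = W"
proof (induction "card W" arbitrary: W rule: less_induct)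
  case less
  note WV = less.prems(1) and nz = less.prems(2)
  have finW: "finite W" using WV finV finite_subset by blast
  show ?case
  proof (cases "W = {}")
    case True
    then show ?thesis unfolding even_hole_configs_def by auto
  next
    case False
    then obtain v where v: "v \<in> W" by blast
    have "cols W \<noteq> {}" and deg: "\<forall>x\<in>W. card {y\<in>W. fadj V x y} = 2" using Fw_nonzero[OF WV nz] by auto
    then obtain W1 where W1: "W1 \<in> cols W" by blast
    obtain ps where ps: "hole_list ps" "set ps \<subseteq> W" and cl: "\<forall>x\<in>set ps. \<forall>y\<in>W. fadj V x y \<longrightarrow> y \<in> set ps"
      using find_hole[OF WV W1 deg v] by blast
    define C where "C = set ps"
    have hC: "even_hole V C" using ps C_def even_hole_iff by blast
    have Cne: "C \<noteq> {}" using ps C_def unfolding hole_list_def by auto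
    have nadj: "\<forall>x\<in>C. \<forall>y\<in>W - C. \<not> fadj V x y" using cl C_def by auto
    have WC: "W = C \<union> (W - C)" using ps C_def by auto
    have CV: "C \<subseteq> V" using ps(2) C_def WV by auto
    have WCV: "W - C \<subseteq> V" using WV by auto
    have "Fw (C \<union> (W - C)) = Fw C * Fw (W - C)"
      using CV WCV nadj by (intro Fw_mult) auto
    then have "Fw W = Fw C * Fw (W - C)" using WC by simp
    then have nz2: "Fw (W - C) \<noteq> 0\<^sub>m (2^n) (2^n)" using nz Fw_zero_mult_right[of "Fw C"] by auto
    have "W - C \<subset> W" using Cne ps(2) C_def by blast
    then have "card (W - C) < card W" using finW by (rule psubset_card_mono[rotated])
    from less.hyps[OF this WCV nz2] obtain X where X: "X \<in> even_hole_configs V" "\<Union>X = W - C" by blast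
    have "insert C X \<in> even_hole_configs V"
      unfolding even_hole_configs_def
    proof (intro CollectI conjI ballI impI)
      fix D assume "D \<in> insert C X"
      then show "even_hole V D" using hC X(1) unfolding even_hole_configs_def by auto
    next
      fix D E assume D: "D \<in> insert C X" and E: "E \<in> insert C X" and ne: "D \<noteq> E"
      have XW: "\<forall>F\<in>X. F \<subseteq> W - C" using X(2) by auto
      show "compatible V D E"
      proof (cases "D = C")
        case True
        then have "E \<in> X" using E ne by auto
        then show ?thesis using True XW nadj unfolding compatible_def by blast
      next
        case False
        then have DX: "D \<in> X" using D by auto
        show ?thesis
        proof (cases "E = C")
          case True
          then show ?thesis using DX XW nadj fadj_sym unfolding compatible_def by blast
        next
          case False
          then show ?thesis using DX E ne X(1) unfolding even_hole_configs_def by auto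
        qed
      qed
    qed
    moreover have "\<Union>(insert C X) = W" using X(2) WC by auto
    ultimately show ?thesis by blast
  qed
qed

end


context ham begin

definition KS :: "pauli list set \<Rightarrow> pauli list set set" where
  "KS W = {K. K \<subseteq> V - closed_nbhd V W \<and> indep V K}"

lemma Ind_finite: "finite {S. indep V S}"
proof -
  have "{S. indep V S} \<subseteq> Pow V" unfolding indep_def by auto
  then show ?thesis using finV by (meson finite_Pow_iff finite_subset)
qed

lemma KS_finite: "finite (KS W)"
proof -
  have "KS W \<subseteq> {S. indep V S}" unfolding KS_def by auto
  then show ?thesis using Ind_finite finite_subset by blast
qed

lemma KS_nadj: "K \<in> KS W \<Longrightarrow> k \<in> K \<Longrightarrow> w \<in> W \<Longrightarrow> \<not> fadj V k w"
  unfolding KS_def closed_nbhd_def using fadj_V by blast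

lemma KS_disj: "K \<in> KS W \<Longrightarrow> K \<inter> W = {}"
  unfolding KS_def closed_nbhd_def by auto

definition phi :: "pauli list set \<times> pauli list set \<times> pauli list set \<Rightarrow> pauli list set \<times> pauli list set" where
  "phi q = (fst (snd q) \<union> snd (snd q), fst (snd q) \<union> (fst q - snd (snd q)))"

definition QQ where "QQ = Sigma (Pow V) (\<lambda>W. Sigma (KS W) (\<lambda>K. cols W))"

lemma phi_bij: "bij_betw phi QQ ({S. indep V S} \<times> {S. indep V S})"
proof (rule bij_betw_byWitness[where f'="\<lambda>p. ((fst p - snd p) \<union> (snd p - fst p), (fst p \<inter> snd p, fst p - snd p))"])
  show "\<forall>q\<in>QQ. (\<lambda>p. ((fst p - snd p) \<union> (snd p - fst p), (fst p \<inter> snd p, fst p - snd p))) (phi q) = q"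
  proof
    fix q assume q: "q \<in> QQ"
    obtain W K W1 where qe: "q = (W, K, W1)" by (cases q) auto
    have "K \<inter> W = {}" "W1 \<subseteq> W" using q qe KS_disj unfolding QQ_def cols_def by auto
    then show "(\<lambda>p. ((fst p - snd p) \<union> (snd p - fst p), (fst p \<inter> snd p, fst p - snd p))) (phi q) = q"
      unfolding qe phi_def by auto
  qed
  show "\<forall>p\<in>{S. indep V S} \<times> {S. indep V S}. phi ((\<lambda>p. ((fst p - snd p) \<union> (snd p - fst p), (fst p \<inter> snd p, fst p - snd p))) p) = p"
    unfolding phi_def by auto
  show "phi ` QQ \<subseteq> {S. indep V S} \<times> {S. indep V S}"
  proof (rule image_subsetI)
    fix q assume q: "q \<in> QQ"
    obtain W K W1 where qe: "q = (W, K, W1)" by (cases q) auto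
    have K: "K \<in> KS W" and W1: "W1 \<in> cols W" using q qe unfolding QQ_def by auto
    have iK: "indep V K" using K unfolding KS_def by auto
    have n1: "\<forall>x\<in>K. \<forall>y\<in>W1. \<not> fadj V x y" using KS_nadj[OF K] W1 unfolding cols_def by auto
    have n2: "\<forall>x\<in>K. \<forall>y\<in>W - W1. \<not> fadj V x y" using KS_nadj[OF K] by auto
    have "indep V (K \<union> W1)" "indep V (K \<union> (W - W1))"
      using iK W1 n1 n2 unfolding cols_def by (auto intro!: indep_union)
    then show "phi q \<in> {S. indep V S} \<times> {S. indep V S}" unfolding qe phi_def by auto
  qed
  show "(\<lambda>p. ((fst p - snd p) \<union> (snd p - fst p), (fst p \<inter> snd p, fst p - snd p))) ` ({S. indep V S} \<times> {S. indep V S}) \<subseteq> QQ"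
  proof (rule image_subsetI)
    fix p assume p: "p \<in> {S. indep V S} \<times> {S. indep V S}"
    obtain S1 S2 where pe: "p = (S1, S2)" by (cases p) auto
    have i: "indep V S1" "indep V S2" using p pe by auto
    define W where "W = (S1 - S2) \<union> (S2 - S1)"
    have WV: "W \<subseteq> V" using i unfolding W_def indep_def by auto
    have "S1 \<inter> S2 \<in> KS W"
    proof -
      have "S1 \<inter> S2 \<subseteq> V - closed_nbhd V W"
        using i unfolding closed_nbhd_def W_def indep_def by blast
      then show ?thesis unfolding KS_def using i indep_sub by auto
    qed
    moreover have "S1 - S2 \<in> cols W"
    proof -
      have "W - (S1 - S2) = S2 - S1" unfolding W_def by auto
      then show ?thesis unfolding cols_def W_def using i indep_sub by auto
    qed
    ultimately show "(\<lambda>p. ((fst p - snd p) \<union> (snd p - fst p), (fst p \<inter> snd p, fst p - snd p))) p \<in> QQ"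
      unfolding QQ_def pe using WV W_def by auto
  qed
qed

lemma term_eq:
  assumes K: "K \<in> KS W" and W1: "W1 \<in> cols W" and WV: "W \<subseteq> V"
  shows "(((- u) ^ card (K \<union> W1)) \<cdot>\<^sub>m h_set n b (K \<union> W1)) * ((u ^ card (K \<union> (W - W1))) \<cdot>\<^sub>m h_set n b (K \<union> (W - W1)))
    = ((- u\<^sup>2) ^ card K * (\<Prod>j\<in>K. complex_of_real ((b j)\<^sup>2)) * u ^ card W) \<cdot>\<^sub>m tm W W1"
proof -
  have iK: "indep V K" using K unfolding KS_def by auto
  have KV: "K \<subseteq> V" using iK unfolding indep_def by auto
  have i1: "indep V W1" "indep V (W - W1)" "W1 \<subseteq> W" using W1 unfolding cols_def by auto
  have sub: "W1 \<subseteq> V" "W - W1 \<subseteq> V" using i1 WV by auto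
  have dis: "K \<inter> W = {}" using KS_disj[OF K] .
  have n1: "\<forall>x\<in>K. \<forall>y\<in>W1. \<not> fadj V x y" using KS_nadj[OF K] i1 by auto
  have n2: "\<forall>x\<in>K. \<forall>y\<in>W - W1. \<not> fadj V x y" using KS_nadj[OF K] by auto
  have n1': "\<forall>x\<in>W1. \<forall>y\<in>K. \<not> fadj V x y" using n1 fadj_sym by blast
  have u1: "h_set n b (K \<union> W1) = h_set n b K * h_set n b W1"
    using iK i1 n1 dis by (intro h_set_union indep_union) auto
  have u2: "h_set n b (K \<union> (W - W1)) = h_set n b K * h_set n b (W - W1)"
    using iK i1 n2 dis by (intro h_set_union indep_union) auto
  have com: "h_set n b W1 * h_set n b K = h_set n b K * h_set n b W1"
    using i1 iK n1' by (intro h_set_comm) auto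
  have fin: "finite K" "finite W1" "finite (W - W1)" using iK i1 indep_finite by auto
  have c1: "card (K \<union> W1) = card K + card W1" using fin dis i1 by (subst card_Un_disjoint) auto
  have c2: "card (K \<union> (W - W1)) = card K + card (W - W1)" using fin dis by (subst card_Un_disjoint) auto
  have cW: "card W = card W1 + card (W - W1)"
    using fin i1 by (metis Diff_disjoint Un_Diff_cancel2 card_Un_disjoint sup.absorb_iff2 Un_commute)
  have "h_set n b (K \<union> W1) * h_set n b (K \<union> (W - W1)) =
        h_set n b K * (h_set n b W1 * (h_set n b K * h_set n b (W - W1)))"
    unfolding u1 u2 using KV sub by simp
  also have "\<dots> = h_set n b K * (h_set n b K * (h_set n b W1 * h_set n b (W - W1)))"
    using KV sub com by (simp add: comm_left)
  also have "\<dots> = (h_set n b K * h_set n b K) * (h_set n b W1 * h_set n b (W - W1))"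
    using KV sub by simp
  also have "\<dots> = (\<Prod>j\<in>K. complex_of_real ((b j)\<^sup>2)) \<cdot>\<^sub>m (h_set n b W1 * h_set n b (W - W1))"
    unfolding h_set_sq[OF iK] using KV sub by simp
  finally have hp: "h_set n b (K \<union> W1) * h_set n b (K \<union> (W - W1)) =
      (\<Prod>j\<in>K. complex_of_real ((b j)\<^sup>2)) \<cdot>\<^sub>m (h_set n b W1 * h_set n b (W - W1))" .
  have sc: "(- u) ^ (card K + card W1) * u ^ (card K + card (W - W1)) =
      (- u\<^sup>2) ^ card K * u ^ (card W1 + card (W - W1)) * (-1) ^ card W1"
  proof -
    have e1: "(- u) ^ (card K + card W1) = ((-1)^card K * (-1)^card W1) * (u^card K * u^card W1)"
      by (subst power_minus) (simp add: power_add mult_ac)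
    have e2: "(- u\<^sup>2) ^ card K = (-1)^card K * (u^card K * u^card K)"
      by (subst power_minus) (simp add: power2_eq_square power_mult_distrib)
    show ?thesis unfolding e1 e2 by (simp only: power_add mult_ac)
  qed
  have cK: "K \<union> W1 \<subseteq> V" "K \<union> (W - W1) \<subseteq> V" using KV sub by auto
  let ?P = "\<Prod>j\<in>K. complex_of_real ((b j)\<^sup>2)"
  let ?M = "h_set n b W1 * h_set n b (W - W1)"
  have "(((- u) ^ card (K \<union> W1)) \<cdot>\<^sub>m h_set n b (K \<union> W1)) * ((u ^ card (K \<union> (W - W1))) \<cdot>\<^sub>m h_set n b (K \<union> (W - W1)))
     = ((- u) ^ card (K \<union> W1) * u ^ card (K \<union> (W - W1))) \<cdot>\<^sub>m (h_set n b (K \<union> W1) * h_set n b (K \<union> (W - W1)))"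
    using cK by (simp add: mult.commute[of "u ^ card (K \<union> (W - W1))" "(- u) ^ card (K \<union> W1)"])
  also have "\<dots> = (((- u) ^ (card K + card W1) * u ^ (card K + card (W - W1))) * ?P) \<cdot>\<^sub>m ?M"
    unfolding hp c1 c2 by simp
  also have "((- u) ^ (card K + card W1) * u ^ (card K + card (W - W1))) * ?P
      = ((- u\<^sup>2) ^ card K * u ^ (card W1 + card (W - W1)) * (-1) ^ card W1) * ?P"
    by (simp only: sc)
  also have "\<dots> = ((- u\<^sup>2) ^ card K * ?P * u ^ card W) * (-1) ^ card W1"
    unfolding cW by (simp only: mult_ac)
  also have "(((- u\<^sup>2) ^ card K * ?P * u ^ card W) * (-1) ^ card W1) \<cdot>\<^sub>m ?M
      = ((- u\<^sup>2) ^ card K * ?P * u ^ card W) \<cdot>\<^sub>m tm W W1"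
    unfolding tm_def by simp
  finally show ?thesis .
qed

end


lemma scalar_final:
  fixes u I :: complex
  assumes "even N"
  shows "(I * u ^ N) * (2 ^ x * (-1) ^ (N div 2)) = (- u\<^sup>2) ^ (N div 2) * 2 ^ x * I"
proof -
  obtain m where N: "N = 2 * m" using assms by (auto elim: evenE)
  have "u ^ N = (u\<^sup>2) ^ m" unfolding N by (simp add: power_mult)
  moreover have "(- u\<^sup>2) ^ m = (-1) ^ m * (u\<^sup>2) ^ m" by (rule power_minus)
  ultimately show ?thesis unfolding N by (simp add: mult_ac)
qed

context ham begin

lemma main:
  "Zop n V b u =
    mat_sum (2 ^ n)
      (\<lambda>X. ((- u\<^sup>2) ^ (card (\<Union>X) div 2) * 2 ^ card X
              * indep_poly V b (V - closed_nbhd V (\<Union>X)) (- u\<^sup>2))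
            \<cdot>\<^sub>m set_prod (2 ^ n) (h_hole n V b) X)
      (even_hole_configs V)"
proof -
  let ?Ind = "{S. indep V S}"
  let ?G = "\<lambda>p. (((- u) ^ card (fst p)) \<cdot>\<^sub>m h_set n b (fst p)) * ((u ^ card (snd p)) \<cdot>\<^sub>m h_set n b (snd p))"
  let ?coef = "\<lambda>W K. (- u\<^sup>2) ^ card K * (\<Prod>j\<in>K. complex_of_real ((b j)\<^sup>2)) * u ^ card W"
  let ?s = "\<lambda>W. indep_poly V b (V - closed_nbhd V W) (- u\<^sup>2) * u ^ card W"
  have cI: "\<forall>S\<in>?Ind. (c \<cdot>\<^sub>m h_set n b S) \<in> CD" for c unfolding indep_def by auto
  have "Zop n V b u = mat_sum (2^n) (\<lambda>S. ((- u) ^ card S) \<cdot>\<^sub>m h_set n b S) ?Ind *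
      mat_sum (2^n) (\<lambda>S. (u ^ card S) \<cdot>\<^sub>m h_set n b S) ?Ind"
    unfolding Zop_def transfer_def by simp
  also have "\<dots> = mat_sum (2^n) ?G (?Ind \<times> ?Ind)"
    using Ind_finite cI by (intro ms_mult) auto
  also have "\<dots> = mat_sum (2^n) (\<lambda>q. ?G (phi q)) QQ"
    by (rule ms_reindex) (rule phi_bij)
  also have "\<dots> = mat_sum (2^n) (\<lambda>q. ?coef (fst q) (fst (snd q)) \<cdot>\<^sub>m tm (fst q) (snd (snd q))) QQ"
  proof (rule ms_cong[OF refl])
    fix q assume q: "q \<in> QQ"
    obtain W K W1 where qe: "q = (W, K, W1)" by (cases q) auto
    have "K \<in> KS W" "W1 \<in> cols W" "W \<subseteq> V" using q qe unfolding QQ_def by auto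
    from term_eq[OF this, of u] show "?G (phi q) = ?coef (fst q) (fst (snd q)) \<cdot>\<^sub>m tm (fst q) (snd (snd q))"
      unfolding qe phi_def by simp
  qed
  also have "\<dots> = mat_sum (2^n) (\<lambda>W. mat_sum (2^n) (\<lambda>r. ?coef W (fst r) \<cdot>\<^sub>m tm W (snd r))
      (Sigma (KS W) (\<lambda>K. cols W))) (Pow V)"
    unfolding QQ_def
    using ms_Sigma[of "Pow V" "\<lambda>W. Sigma (KS W) (\<lambda>K. cols W)" "2^n" "\<lambda>W r. ?coef W (fst r) \<cdot>\<^sub>m tm W (snd r)"]
      finV KS_finite cols_finite by (auto intro!: finite_SigmaI)
  also have "\<dots> = mat_sum (2^n) (\<lambda>W. ?s W \<cdot>\<^sub>m Fw W) (Pow V)"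
  proof (rule ms_cong[OF refl])
    fix W assume W: "W \<in> Pow V"
    then have WV: "W \<subseteq> V" by auto
    have ct: "\<forall>W1\<in>cols W. tm W W1 \<in> CD" using tm_carrier[OF WV] by auto
    have "mat_sum (2^n) (\<lambda>r. ?coef W (fst r) \<cdot>\<^sub>m tm W (snd r)) (Sigma (KS W) (\<lambda>K. cols W))
        = mat_sum (2^n) (\<lambda>K. mat_sum (2^n) (\<lambda>W1. ?coef W K \<cdot>\<^sub>m tm W W1) (cols W)) (KS W)"
      using ms_Sigma[of "KS W" "\<lambda>K. cols W" "2^n" "\<lambda>K W1. ?coef W K \<cdot>\<^sub>m tm W W1"]
        KS_finite cols_finite[OF WV] by simp
    also have "\<dots> = mat_sum (2^n) (\<lambda>K. ?coef W K \<cdot>\<^sub>m Fw W) (KS W)"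
      unfolding Fw_def using ms_smult[OF ct] by simp
    also have "\<dots> = (\<Sum>K\<in>KS W. ?coef W K) \<cdot>\<^sub>m Fw W"
      by (rule ms_scalar) simp
    also have "(\<Sum>K\<in>KS W. ?coef W K) = ?s W"
      unfolding indep_poly_def KS_def by (simp add: sum_distrib_right)
    finally show "mat_sum (2^n) (\<lambda>r. ?coef W (fst r) \<cdot>\<^sub>m tm W (snd r)) (Sigma (KS W) (\<lambda>K. cols W))
        = ?s W \<cdot>\<^sub>m Fw W" .
  qed
  also have "\<dots> = mat_sum (2^n) (\<lambda>W. ?s W \<cdot>\<^sub>m Fw W) (Union ` even_hole_configs V)"
  proof (rule ms_mono_neutral)
    show "finite (Pow V)" using finV by simp
    show "Union ` even_hole_configs V \<subseteq> Pow V" using config_Union_sub by auto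
    show "\<forall>W\<in>Pow V - Union ` even_hole_configs V. ?s W \<cdot>\<^sub>m Fw W = 0\<^sub>m (2^n) (2^n)"
    proof
      fix W assume W: "W \<in> Pow V - Union ` even_hole_configs V"
      then have "Fw W = 0\<^sub>m (2^n) (2^n)" using Fw_nonzero_config[of W] by auto
      then show "?s W \<cdot>\<^sub>m Fw W = 0\<^sub>m (2^n) (2^n)" by simp
    qed
  qed
  also have "\<dots> = mat_sum (2^n) (\<lambda>X. ?s (\<Union>X) \<cdot>\<^sub>m Fw (\<Union>X)) (even_hole_configs V)"
  proof (rule ms_reindex)
    show "bij_betw Union (even_hole_configs V) (Union ` even_hole_configs V)"
    proof (rule inj_on_imp_bij_betw)
      show "inj_on Union (even_hole_configs V)" unfolding inj_on_def using config_inj by blast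
    qed
  qed
  also have "\<dots> = mat_sum (2 ^ n)
      (\<lambda>X. ((- u\<^sup>2) ^ (card (\<Union>X) div 2) * 2 ^ card X
              * indep_poly V b (V - closed_nbhd V (\<Union>X)) (- u\<^sup>2))
            \<cdot>\<^sub>m set_prod (2 ^ n) (h_hole n V b) X)
      (even_hole_configs V)"
  proof (rule ms_cong[OF refl])
    fix X assume X: "X \<in> even_hole_configs V"
    have F: "Fw (\<Union>X) = (2 ^ card X * (-1) ^ (card (\<Union>X) div 2)) \<cdot>\<^sub>m set_prod (2^n) (h_hole n V b) X"
      and ev: "even (card (\<Union>X))" using Fw_config[OF X] by auto
    show "?s (\<Union>X) \<cdot>\<^sub>m Fw (\<Union>X) = ((- u\<^sup>2) ^ (card (\<Union>X) div 2) * 2 ^ card X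
              * indep_poly V b (V - closed_nbhd V (\<Union>X)) (- u\<^sup>2))
            \<cdot>\<^sub>m set_prod (2 ^ n) (h_hole n V b) X"
      unfolding F smult_smult_mat
      by (simp only: scalar_final[OF ev, of "indep_poly V b (V - closed_nbhd V (\<Union>X)) (- u\<^sup>2)" u "card X"])
  qed
  finally show ?thesis .
qed

end

theorem lemma11:
  fixes n :: nat and V :: "pauli list set" and b :: "pauli list \<Rightarrow> real" and u :: complex
  assumes "finite V"
    and "\<forall>j\<in>V. length j = n"
    and "\<forall>j\<in>V. b j \<noteq> 0"
    and "claw_free V"
  shows "Zop n V b u =
    mat_sum (2 ^ n)
      (\<lambda>X. ((- u\<^sup>2) ^ (card (\<Union>X) div 2) * 2 ^ card X
              * indep_poly V b (V - closed_nbhd V (\<Union>X)) (- u\<^sup>2))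
            \<cdot>\<^sub>m set_prod (2 ^ n) (h_hole n V b) X)
      (even_hole_configs V)"
proof -
  interpret ham n V b using assms by unfold_locales auto
  show ?thesis by (rule main)
qed


end
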